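(* For every integer $n\ge2$, the Higman–Thompson group $V_n$ is generated by four involutions.
   Context: For $n\ge2$ let $n^*$ be the set of finite words over $\{0,\dots,n-1\}$ (the rooted $n$-ary tree). Let $\mathfrak T_n$ be the set of finite rooted subtrees $\tau\subseteq n^*$ closed under prefixes, containing the empty word, and such that for each word $\alpha$, either all or none of $\alpha0,\dots,\alpha(n-1)$ lie in $\tau$; $\mathrm{Lea}(\tau)$ is its set of leaves. For $\tau_0,\tau_1\in\mathfrak T_n$ with the same number of leaves, a bijection $b\colon\mathrm{Lea}(\tau_0)\to\mathrm{Lea}(\tau_1)$ induces the bijection $\alpha\gamma\mapsto b(\alpha)\gamma$ between cofinite subsets of $n^*$. $V_n$ is the group of such bijections modulo equality on a cofinite subset of $n^*$, under composition (this is Higman's $G_{n,1}$; $V_2$ is Thompson's group $V$). *)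

theory Defs
  imports "HOL-Algebra.Generated_Groups"
begin

text \<open>Words over the alphabet {0,...,n-1}: the rooted n-ary tree n*.\<close>
definition words :: "nat \<Rightarrow> nat list set" where
  "words n = {w. set w \<subseteq> {..<n}}"

definition is_tree :: "nat \<Rightarrow> nat list set \<Rightarrow> bool" where
  "is_tree n \<tau> \<longleftrightarrow> finite \<tau> \<and> \<tau> \<subseteq> words n \<and> [] \<in> \<tau>
     \<and> (\<forall>\<alpha> \<beta>. \<alpha> @ \<beta> \<in> \<tau> \<longrightarrow> \<alpha> \<in> \<tau>)
     \<and> (\<forall>\<alpha>. (\<forall>i<n. \<alpha> @ [i] \<in> \<tau>) \<or> (\<forall>i<n. \<alpha> @ [i] \<notin> \<tau>))"

definition leaves :: "nat \<Rightarrow> nat list set \<Rightarrow> nat list set" where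
  "leaves n \<tau> = {\<alpha> \<in> \<tau>. \<forall>i<n. \<alpha> @ [i] \<notin> \<tau>}"

text \<open>The prefix-replacement map alpha gamma |-> b(alpha) gamma induced by b on the leaves of tau0,
  extended by the identity outside its (cofinite) domain.\<close>
definition pmap :: "nat \<Rightarrow> nat list set \<Rightarrow> (nat list \<Rightarrow> nat list) \<Rightarrow> nat list \<Rightarrow> nat list" where
  "pmap n \<tau>0 b w =
     (if \<exists>\<alpha>\<in>leaves n \<tau>0. \<exists>\<gamma>. w = \<alpha> @ \<gamma>
      then (let \<alpha> = (THE \<alpha>. \<alpha> \<in> leaves n \<tau>0 \<and> (\<exists>\<gamma>. w = \<alpha> @ \<gamma>))
            in b \<alpha> @ drop (length \<alpha>) w)
      else w)"

definition V_maps :: "nat \<Rightarrow> (nat list \<Rightarrow> nat list) set" where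
  "V_maps n = {pmap n \<tau>0 b | \<tau>0 \<tau>1 b. is_tree n \<tau>0 \<and> is_tree n \<tau>1
                  \<and> bij_betw b (leaves n \<tau>0) (leaves n \<tau>1)}"

definition germ_eq :: "nat \<Rightarrow> (nat list \<Rightarrow> nat list) \<Rightarrow> (nat list \<Rightarrow> nat list) \<Rightarrow> bool" where
  "germ_eq n f g \<longleftrightarrow> finite {w \<in> words n. f w \<noteq> g w}"

definition germ :: "nat \<Rightarrow> (nat list \<Rightarrow> nat list) \<Rightarrow> (nat list \<Rightarrow> nat list) set" where
  "germ n f = {g. germ_eq n f g}"

definition Vgroup :: "nat \<Rightarrow> (nat list \<Rightarrow> nat list) set monoid" where
  "Vgroup n = \<lparr> carrier = germ n ` V_maps n,
               mult = (\<lambda>X Y. germ n ((SOME f. f \<in> X) \<circ> (SOME g. g \<in> Y))),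
               one = germ n id \<rparr>"

end

theory Submission
  imports Defs "HOL-Library.Sublist"
begin



lemma words_append[simp]: "xs @ ys \<in> words n \<longleftrightarrow> xs \<in> words n \<and> ys \<in> words n"
  by (auto simp: words_def)
lemma words_Nil[simp]: "[] \<in> words n"
  by (auto simp: words_def)
lemma words_Cons[simp]: "x # xs \<in> words n \<longleftrightarrow> x < n \<and> xs \<in> words n"
  by (auto simp: words_def)
lemma words_drop: "w \<in> words n \<Longrightarrow> drop k w \<in> words n"
  by (auto simp: words_def dest: in_set_dropD)
lemma words_take: "w \<in> words n \<Longrightarrow> take k w \<in> words n"
  by (auto simp: words_def dest: in_set_takeD)
lemma words_prefix: "prefix a w \<Longrightarrow> w \<in> words n \<Longrightarrow> a \<in> words n"
  by (auto simp: prefix_def)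

definition antichain :: "nat list set \<Rightarrow> bool" where
  "antichain A \<longleftrightarrow> (\<forall>a\<in>A. \<forall>b\<in>A. prefix a b \<longrightarrow> a = b)"

definition cmap :: "nat \<Rightarrow> nat list set \<Rightarrow> (nat list \<Rightarrow> nat list) \<Rightarrow> nat list \<Rightarrow> nat list" where
  "cmap n A \<pi> w = (if w \<in> words n \<and> (\<exists>a\<in>A. prefix a w)
     then (let a = (THE a. a \<in> A \<and> prefix a w) in \<pi> a @ drop (length a) w) else w)"

lemma antichain_unique: "antichain A \<Longrightarrow> a \<in> A \<Longrightarrow> b \<in> A \<Longrightarrow> prefix a w \<Longrightarrow> prefix b w \<Longrightarrow> a = b"
  unfolding antichain_def by (metis prefix_same_cases)

lemma antichain_the: "antichain A \<Longrightarrow> a \<in> A \<Longrightarrow> prefix a w \<Longrightarrow> (THE a. a \<in> A \<and> prefix a w) = a"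
  by (rule the_equality) (auto dest: antichain_unique)

lemma cmap_pref: "antichain A \<Longrightarrow> a \<in> A \<Longrightarrow> prefix a w \<Longrightarrow> w \<in> words n \<Longrightarrow> cmap n A \<pi> w = \<pi> a @ drop (length a) w"
  unfolding cmap_def using antichain_the by (auto simp: Let_def)

lemma cmap_cone: "antichain A \<Longrightarrow> a \<in> A \<Longrightarrow> a @ g \<in> words n \<Longrightarrow> cmap n A \<pi> (a @ g) = \<pi> a @ g"
  by (simp add: cmap_pref)

lemma cmap_out: "\<not> (\<exists>a\<in>A. prefix a w) \<Longrightarrow> cmap n A \<pi> w = w"
  unfolding cmap_def by auto

lemma cmap_nw: "w \<notin> words n \<Longrightarrow> cmap n A \<pi> w = w"
  unfolding cmap_def by auto

lemma cmap_cases[consumes 1, case_names out cone]: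
  assumes "antichain A"
  obtains (out) "cmap n A \<pi> w = w" "w \<notin> words n \<or> \<not> (\<exists>a\<in>A. prefix a w)"
  | (cone) a g where "a \<in> A" "w = a @ g" "g \<in> words n" "a \<in> words n" "cmap n A \<pi> w = \<pi> a @ g"
proof (cases "w \<in> words n \<and> (\<exists>a\<in>A. prefix a w)")
  case True
  then obtain a where a: "a \<in> A" "prefix a w" by auto
  then obtain g where g: "w = a @ g" by (auto simp: prefix_def)
  show ?thesis
    apply (rule cone[OF a(1) g])
    using True g a assms by (auto simp: cmap_cone)
next
  case False
  then show ?thesis using out cmap_out cmap_nw by blast
qed

lemma cmap_cong: assumes ac: "antichain A" and e: "\<And>a. a \<in> A \<Longrightarrow> \<pi> a = \<rho> a"
  shows "cmap n A \<pi> = cmap n A \<rho>"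
proof
  fix x show "cmap n A \<pi> x = cmap n A \<rho> x"
  proof (cases "x \<in> words n \<and> (\<exists>a\<in>A. prefix a x)")
    case True
    then obtain a where "a \<in> A" "prefix a x" "x \<in> words n" by auto
    then show ?thesis using cmap_pref[OF ac] e by metis
  next
    case False then show ?thesis using cmap_out cmap_nw by metis
  qed
qed

lemma cmap_id: "antichain A \<Longrightarrow> cmap n A (\<lambda>x. x) = id"
proof
  fix w assume "antichain A"
  then show "cmap n A (\<lambda>x. x) w = id w"
    by (cases rule: cmap_cases[where w=w and n=n and \<pi>="\<lambda>x. x"]) auto
qed

lemma cmap_comp:
  assumes ac: "antichain A" and sub: "A \<subseteq> words n" and r: "\<rho> ` A \<subseteq> A"
  shows "cmap n A \<pi> (cmap n A \<rho> w) = cmap n A (\<pi> \<circ> \<rho>) w"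
using ac proof (cases rule: cmap_cases[where w=w and n=n and \<pi>=\<rho>])
  case out
  then show ?thesis using cmap_out cmap_nw by metis
next
  case (cone a g)
  have "\<rho> a \<in> A" using r cone by auto
  moreover have "\<rho> a @ g \<in> words n" using calculation sub cone by auto
  ultimately show ?thesis using cone ac by (simp add: cmap_cone)
qed

lemma cmap_words: "A \<subseteq> words n \<Longrightarrow> antichain A \<Longrightarrow> \<pi> ` A \<subseteq> A \<Longrightarrow> w \<in> words n \<Longrightarrow> cmap n A \<pi> w \<in> words n"
  by (cases rule: cmap_cases[where A=A and w=w and n=n and \<pi>=\<pi>]) auto

abbreviation iv :: "(nat list \<Rightarrow> nat list) \<Rightarrow> nat list \<Rightarrow> nat list" where
  "iv f \<equiv> inv_into UNIV f"

definition Gd :: "nat \<Rightarrow> (nat list \<Rightarrow> nat list) \<Rightarrow> bool" where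
  "Gd n f \<longleftrightarrow> bij_betw f (words n) (words n) \<and> (\<forall>w. w \<notin> words n \<longrightarrow> f w = w)
     \<and> finite {w \<in> words n. \<exists>i<n. f (w @ [i]) \<noteq> f w @ [i]}"

lemma Gd_bij: assumes "Gd n f" shows "bij f"
proof -
  have b: "bij_betw f (words n) (words n)" and oo: "\<And>w. w \<notin> words n \<Longrightarrow> f w = w"
    using assms by (auto simp: Gd_def)
  have im: "x \<in> words n \<Longrightarrow> f x \<in> words n" for x using b by (auto simp: bij_betw_def)
  have "inj f"
  proof (rule injI)
    fix x y assume e: "f x = f y"
    show "x = y"
    proof (cases "x \<in> words n"; cases "y \<in> words n")
      assume "x \<in> words n" "y \<in> words n" then show ?thesis using b e by (auto simp: bij_betw_def inj_on_def)
    next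
      assume "x \<in> words n" "y \<notin> words n" then show ?thesis using im e oo by force
    next
      assume "x \<notin> words n" "y \<in> words n" then show ?thesis using im e oo by force
    next
      assume "x \<notin> words n" "y \<notin> words n" then show ?thesis using e oo by auto
    qed
  qed
  moreover have "surj f"
  proof -
    { fix y have "y \<in> range f"
      proof (cases "y \<in> words n")
        case True then have "y \<in> f ` words n" using b by (simp add: bij_betw_def)
        then show ?thesis by auto
      next
        case False then show ?thesis using oo by (metis rangeI)
      qed }
    then show ?thesis by auto
  qed
  ultimately show ?thesis by (simp add: bij_def)
qed

lemma Gd_words: "Gd n f \<Longrightarrow> w \<in> words n \<Longrightarrow> f w \<in> words n"
  by (auto simp: Gd_def dest: bij_betwE)

lemma Gd_words_iff: "Gd n f \<Longrightarrow> f w \<in> words n \<longleftrightarrow> w \<in> words n"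
  by (metis Gd_def Gd_words)

lemma Gd_inv_words: assumes "Gd n f" shows "iv f w \<in> words n \<longleftrightarrow> w \<in> words n"
proof -
  have "f (iv f w) = w" using Gd_bij[OF assms] by (simp add: bij_is_surj surj_f_inv_f)
  then show ?thesis using Gd_words_iff[OF assms, of "iv f w"] by simp
qed

lemma Gd_id: "Gd n id"
  by (auto simp: Gd_def)

lemma Gd_comp: assumes f: "Gd n f" and g: "Gd n g" shows "Gd n (f \<circ> g)"
proof -
  let ?E = "\<lambda>f. {w \<in> words n. \<exists>i<n. f (w @ [i]) \<noteq> f w @ [i]}"
  have "?E (f \<circ> g) \<subseteq> ?E g \<union> {w \<in> words n. g w \<in> ?E f}"
    using Gd_words[OF g] by auto
  moreover have "finite {w \<in> words n. g w \<in> ?E f}"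
  proof (rule finite_imageD)
    show "finite (g ` {w \<in> words n. g w \<in> ?E f})"
      by (rule finite_subset[of _ "?E f"]) (use f in \<open>auto simp: Gd_def\<close>)
    show "inj_on g {w \<in> words n. g w \<in> ?E f}"
      using Gd_bij[OF g] by (meson bij_is_inj inj_on_subset subset_UNIV)
  qed
  moreover have "finite (?E g)" using g by (simp add: Gd_def)
  ultimately have "finite (?E (f \<circ> g))"
    by (meson finite_UnI finite_subset)
  moreover have "bij_betw (f \<circ> g) (words n) (words n)"
    using f g by (auto simp: Gd_def intro: bij_betw_trans)
  moreover have "\<forall>w. w \<notin> words n \<longrightarrow> (f \<circ> g) w = w" using f g by (auto simp: Gd_def)
  ultimately show ?thesis unfolding Gd_def by blast
qed

lemma Gd_inv: assumes f: "Gd n f" shows "Gd n (iv f)"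
proof -
  let ?E = "\<lambda>f. {w \<in> words n. \<exists>i<n. f (w @ [i]) \<noteq> f w @ [i]}"
  have B: "bij f" by (rule Gd_bij[OF f])
  have "?E (iv f) \<subseteq> f ` ?E f"
  proof
    fix w assume w: "w \<in> ?E (iv f)"
    then obtain i where i: "i < n" "iv f (w @ [i]) \<noteq> iv f w @ [i]" and ww: "w \<in> words n" by auto
    let ?z = "iv f w"
    have z: "?z \<in> words n" using Gd_inv_words[OF f] ww by auto
    have fz: "f ?z = w" using B by (simp add: bij_is_surj surj_f_inv_f)
    have "f (?z @ [i]) \<noteq> f ?z @ [i]"
    proof
      assume "f (?z @ [i]) = f ?z @ [i]"
      then have "iv f (w @ [i]) = ?z @ [i]" using fz B by (metis bij_is_inj inv_f_f)
      then show False using i by simp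
    qed
    then have "?z \<in> ?E f" using z i by auto
    then have "f ?z \<in> f ` ?E f" by (rule imageI)
    then show "w \<in> f ` ?E f" using fz by simp
  qed
  moreover have "finite (f ` ?E f)" using f by (simp add: Gd_def)
  ultimately have "finite (?E (iv f))" by (rule finite_subset)
  moreover have "bij_betw (iv f) (words n) (words n)"
  proof -
    have "bij_betw (inv_into (words n) f) (words n) (words n)"
      using f by (simp add: Gd_def bij_betw_inv_into)
    moreover have "\<forall>w\<in>words n. inv_into (words n) f w = iv f w"
    proof
      fix w assume w: "w \<in> words n"
      have "iv f w \<in> words n" using Gd_inv_words[OF f] w by auto
      moreover have "f (iv f w) = w" using B by (simp add: bij_is_surj surj_f_inv_f)
      ultimately show "inv_into (words n) f w = iv f w"
        using f bij_betw_inv_into_left[of f "words n" "words n" "iv f w"] unfolding Gd_def by simp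
    qed
    ultimately show ?thesis using bij_betw_cong[of "words n" "inv_into (words n) f" "iv f" "words n"] by simp
  qed
  moreover have "\<forall>w. w \<notin> words n \<longrightarrow> iv f w = w"
  proof (intro allI impI)
    fix w assume "w \<notin> words n"
    then have "f w = w" using f by (simp add: Gd_def)
    then show "iv f w = w" using B by (metis bij_is_inj inv_f_f)
  qed
  ultimately show ?thesis unfolding Gd_def by blast
qed

lemma Gd_cmap:
  assumes fin: "finite A" and sub: "A \<subseteq> words n" and ac: "antichain A" and p: "bij_betw \<pi> A A"
  shows "Gd n (cmap n A \<pi>)"
proof -
  let ?f = "cmap n A \<pi>"
  let ?E = "\<lambda>f. {w \<in> words n. \<exists>i<n. f (w @ [i]) \<noteq> f w @ [i]}"
  have pA: "\<pi> ` A \<subseteq> A" using p by (simp add: bij_betw_def)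
  let ?q = "inv_into A \<pi>"
  have qA: "?q ` A \<subseteq> A" using p by (metis bij_betw_def bij_betw_inv_into eq_iff)
  have l: "cmap n A ?q (?f w) = w" for w
    using cmap_comp[OF ac sub pA, of ?q w] cmap_cong[OF ac, of "?q \<circ> \<pi>" "\<lambda>x. x" n] cmap_id[OF ac]
    using p by (simp add: bij_betw_def)
  have r: "?f (cmap n A ?q w) = w" for w
    using cmap_comp[OF ac sub qA, of \<pi> w] cmap_cong[OF ac, of "\<pi> \<circ> ?q" "\<lambda>x. x" n] cmap_id[OF ac]
    using p by (simp add: bij_betw_def f_inv_into_f)
  have B: "bij_betw ?f (words n) (words n)"
    apply (rule bij_betw_byWitness[where f'="cmap n A ?q"])
    using l r cmap_words[OF sub ac pA] cmap_words[OF sub ac qA] by auto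
  have "?E ?f \<subseteq> butlast ` A"
  proof
    fix w assume "w \<in> ?E ?f"
    then obtain i where i: "i < n" "?f (w @ [i]) \<noteq> ?f w @ [i]" and w: "w \<in> words n" by auto
    show "w \<in> butlast ` A"
    proof (cases "\<exists>a\<in>A. prefix a w")
      case True
      then obtain a where a: "a \<in> A" "prefix a w" by auto
      then have "prefix a (w @ [i])" by auto
      then have "?f (w @ [i]) = ?f w @ [i]" using cmap_pref[OF ac a] cmap_pref[OF ac a(1) \<open>prefix a (w@[i])\<close>] w i a
        by (auto simp: prefix_def)
      then show ?thesis using i by simp
    next
      case False
      then have fw: "?f w = w" by (rule cmap_out)
      show ?thesis
      proof (cases "\<exists>a\<in>A. prefix a (w @ [i])")
        case True
        then obtain a where "a \<in> A" "prefix a (w @ [i])" by auto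
        then have "a = w @ [i]" using False by (auto simp: prefix_snoc)
        then show ?thesis using \<open>a \<in> A\<close> by (metis butlast_snoc image_eqI)
      next
        case False
        then show ?thesis using i fw cmap_out by metis
      qed
    qed
  qed
  then have F: "finite (?E ?f)" using fin by (meson finite_imageI finite_subset)
  have N: "\<forall>w. w \<notin> words n \<longrightarrow> ?f w = w" using cmap_nw by blast
  show ?thesis unfolding Gd_def using F N \<open>bij_betw ?f (words n) (words n)\<close> by blast
qed




lemma tree_words: "is_tree n \<tau> \<Longrightarrow> \<tau> \<subseteq> words n" by (simp add: is_tree_def)
lemma tree_fin: "is_tree n \<tau> \<Longrightarrow> finite \<tau>" by (simp add: is_tree_def)
lemma tree_Nil: "is_tree n \<tau> \<Longrightarrow> [] \<in> \<tau>" by (simp add: is_tree_def)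
lemma tree_pref: "is_tree n \<tau> \<Longrightarrow> x @ y \<in> \<tau> \<Longrightarrow> x \<in> \<tau>" unfolding is_tree_def by blast
lemma tree_pref2: "is_tree n \<tau> \<Longrightarrow> prefix x y \<Longrightarrow> y \<in> \<tau> \<Longrightarrow> x \<in> \<tau>"
  by (auto simp: prefix_def tree_pref)
lemma tree_child: "is_tree n \<tau> \<Longrightarrow> \<alpha> @ [i] \<in> \<tau> \<Longrightarrow> j < n \<Longrightarrow> i < n \<Longrightarrow> \<alpha> @ [j] \<in> \<tau>"
  unfolding is_tree_def by blast
lemma leaves_sub: "leaves n \<tau> \<subseteq> \<tau>" by (auto simp: leaves_def)
lemma nonleaf: "\<alpha> \<in> \<tau> \<Longrightarrow> \<alpha> \<notin> leaves n \<tau> \<Longrightarrow> is_tree n \<tau> \<Longrightarrow> i < n \<Longrightarrow> \<alpha> @ [i] \<in> \<tau>"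
  unfolding leaves_def using tree_child by blast

lemma max_len_elem:
  assumes "finite S" "S \<noteq> {}"
  shows "\<exists>l\<in>S. \<forall>y\<in>S. length y \<le> length l"
proof -
  have "Max (length ` S) \<in> length ` S" using assms by auto
  then obtain l where "l \<in> S" "length l = Max (length ` S)" by auto
  moreover have "\<forall>y\<in>S. length y \<le> Max (length ` S)" using assms by auto
  ultimately show ?thesis by metis
qed

lemma tree_leaf_ext:
  assumes t: "is_tree n \<tau>" and x: "x \<in> \<tau>"
  shows "\<exists>l\<in>leaves n \<tau>. prefix x l"
proof -
  let ?S = "{y \<in> \<tau>. prefix x y}"
  have fin: "finite ?S" using tree_fin[OF t] by auto
  have ne: "?S \<noteq> {}" using x by auto
  obtain l where l: "l \<in> ?S" and mx: "\<And>y. y \<in> ?S \<Longrightarrow> length y \<le> length l"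
    using max_len_elem[OF fin ne] by blast
  have "l \<in> leaves n \<tau>"
  proof (unfold leaves_def, intro CollectI conjI allI impI)
    show "l \<in> \<tau>" using l by auto
    fix i assume "i < n"
    show "l @ [i] \<notin> \<tau>"
    proof
      assume "l @ [i] \<in> \<tau>"
      then have "l @ [i] \<in> ?S" using l by (auto simp: prefix_def)
      then show False using mx by fastforce
    qed
  qed
  then show ?thesis using l by auto
qed

lemma leaves_antichain: assumes t: "is_tree n \<tau>" shows "antichain (leaves n \<tau>)"
  unfolding antichain_def
proof (intro ballI impI)
  fix a b assume a: "a \<in> leaves n \<tau>" and b: "b \<in> leaves n \<tau>" and p: "prefix a b"
  show "a = b"
  proof (rule ccontr)
    assume "a \<noteq> b"
    then obtain c r where "b = a @ c # r" using p by (metis append.right_neutral neq_Nil_conv prefix_def)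
    then have ac: "a @ [c] \<in> \<tau>" using b t by (metis append_Cons append_Nil append_assoc leaves_sub subsetD tree_pref)
    have "c < n" using ac t by (metis tree_words subsetD words_append words_Cons)
    then show False using a ac by (auto simp: leaves_def)
  qed
qed

lemma tree_cover:
  assumes t: "is_tree n \<tau>" and w: "w \<in> words n" and nw: "w \<notin> \<tau>"
  shows "\<exists>l\<in>leaves n \<tau>. prefix l w"
proof -
  let ?K = "{k. k \<le> length w \<and> take k w \<in> \<tau>}"
  have "0 \<in> ?K" using tree_Nil[OF t] by auto
  have fK: "finite ?K" by auto
  define m where "m = Max ?K"
  have mK: "m \<in> ?K" unfolding m_def using Max_in[OF fK] \<open>0 \<in> ?K\<close> by blast
  have mx: "k \<in> ?K \<Longrightarrow> k \<le> m" for k unfolding m_def using fK by auto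
  have "m \<noteq> length w" using mK nw by auto
  then have ml: "m < length w" using mK by auto
  have tk: "take (Suc m) w = take m w @ [w ! m]" using ml by (simp add: take_Suc_conv_app_nth)
  have "take (Suc m) w \<notin> \<tau>" using mx[of "Suc m"] ml by auto
  then have nt: "take m w @ [w ! m] \<notin> \<tau>" using tk by simp
  have wm: "w ! m < n" using w ml nth_mem[of m w] unfolding words_def by blast
  have "take m w \<in> leaves n \<tau>"
    unfolding leaves_def using mK nt wm tree_child[OF t] by blast
  then show ?thesis by (metis prefixI append_take_drop_id)
qed

lemma leaf_unique: "is_tree n \<tau> \<Longrightarrow> a \<in> leaves n \<tau> \<Longrightarrow> b \<in> leaves n \<tau> \<Longrightarrow> prefix a w \<Longrightarrow> prefix b w \<Longrightarrow> a = b"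
  using antichain_unique leaves_antichain by blast

lemma pmap_cone:
  assumes t: "is_tree n \<tau>" and l: "l \<in> leaves n \<tau>"
  shows "pmap n \<tau> b (l @ g) = b l @ g"
proof -
  have "(THE \<alpha>. \<alpha> \<in> leaves n \<tau> \<and> (\<exists>\<gamma>. l @ g = \<alpha> @ \<gamma>)) = l"
  proof (rule the_equality)
    show "l \<in> leaves n \<tau> \<and> (\<exists>\<gamma>. l @ g = l @ \<gamma>)" using l by auto
    fix a assume "a \<in> leaves n \<tau> \<and> (\<exists>\<gamma>. l @ g = a @ \<gamma>)"
    then show "a = l" using leaf_unique[OF t _ l, of a "l @ g"] by (auto simp: prefix_def)
  qed
  then show ?thesis using l unfolding pmap_def by (auto simp: Let_def)
qed

lemma pmap_germ:
  assumes t: "is_tree n \<tau>" and h: "\<And>l g. l \<in> leaves n \<tau> \<Longrightarrow> g \<in> words n \<Longrightarrow> f (l @ g) = b l @ g"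
  shows "germ_eq n (pmap n \<tau> b) f"
proof -
  have "{w \<in> words n. pmap n \<tau> b w \<noteq> f w} \<subseteq> \<tau>"
  proof
    fix w assume w: "w \<in> {w \<in> words n. pmap n \<tau> b w \<noteq> f w}"
    show "w \<in> \<tau>"
    proof (rule ccontr)
      assume "w \<notin> \<tau>"
      then obtain l where l: "l \<in> leaves n \<tau>" "prefix l w" using tree_cover[OF t] w by auto
      then obtain g where g: "w = l @ g" by (auto simp: prefix_def)
      then have "g \<in> words n" using w by auto
      then show False using w g pmap_cone[OF t l(1)] h[OF l(1)] by auto
    qed
  qed
  then show ?thesis unfolding germ_eq_def using tree_fin[OF t] finite_subset by blast
qed

lemma germ_eq_refl: "germ_eq n f f" by (simp add: germ_eq_def)
lemma germ_eq_sym: "germ_eq n f g \<Longrightarrow> germ_eq n g f"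
proof -
  assume a: "germ_eq n f g"
  have "{w \<in> words n. g w \<noteq> f w} = {w \<in> words n. f w \<noteq> g w}" by auto
  then show ?thesis using a unfolding germ_eq_def by simp
qed
lemma germ_eq_trans: "germ_eq n f g \<Longrightarrow> germ_eq n g h \<Longrightarrow> germ_eq n f h"
proof -
  assume a: "germ_eq n f g" "germ_eq n g h"
  have "{w \<in> words n. f w \<noteq> h w} \<subseteq> {w \<in> words n. f w \<noteq> g w} \<union> {w \<in> words n. g w \<noteq> h w}" by auto
  then show ?thesis using a unfolding germ_eq_def by (meson finite_UnI finite_subset)
qed

lemma Gd_ext:
  assumes f: "Gd n f" and N: "\<forall>w\<in>{w \<in> words n. \<exists>i<n. f (w @ [i]) \<noteq> f w @ [i]}. length w < N"
    and w: "w \<in> words n" "N \<le> length w"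
  shows "g \<in> words n \<Longrightarrow> f (w @ g) = f w @ g"
proof (induction g rule: rev_induct)
  case Nil then show ?case by simp
next
  case (snoc x xs)
  have xs: "xs \<in> words n" "x < n" using snoc.prems by auto
  have "w @ xs \<in> words n" using w xs by simp
  moreover have "\<not> length (w @ xs) < N" using w by simp
  ultimately have "f ((w @ xs) @ [x]) = f (w @ xs) @ [x]" using N xs by blast
  then show ?case using snoc.IH[OF xs(1)] by simp
qed

lemma finite_words_le: "finite {w \<in> words n. length w \<le> N}"
proof -
  have "{w \<in> words n. length w \<le> N} = {xs. set xs \<subseteq> {..<n} \<and> length xs \<le> N}"
    by (auto simp: words_def)
  then show ?thesis using finite_lists_length_le[of "{..<n}" N] by simp
qed

lemma Gd_Vmap:
  assumes f: "Gd n f" and n1: "1 \<le> n"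
  shows "\<exists>v \<in> V_maps n. germ_eq n f v"
proof -
  let ?E = "{w \<in> words n. \<exists>i<n. f (w @ [i]) \<noteq> f w @ [i]}"
  have "finite ?E" using f by (simp add: Gd_def)
  then have "finite (length ` ?E)" by simp
  then obtain N where N: "\<forall>w\<in>?E. length w < N"
    by (meson finite_nat_set_iff_bounded imageI)
  have ext: "\<And>w g. w \<in> words n \<Longrightarrow> N \<le> length w \<Longrightarrow> g \<in> words n \<Longrightarrow> f (w @ g) = f w @ g"
    using Gd_ext[OF f N] by blast
  have B: "bij f" using Gd_bij[OF f] .
  have inj: "inj f" using B bij_is_inj by blast
  define \<tau>0 where "\<tau>0 = {w \<in> words n. length w \<le> N}"
  define L0 where "L0 = {w \<in> words n. length w = N}"
  define A where "A = f ` L0"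
  define \<tau>1 where "\<tau>1 = {x. \<exists>a\<in>A. prefix x a}"
  have t0: "is_tree n \<tau>0"
    unfolding is_tree_def \<tau>0_def using finite_words_le[of n N] by auto
  have l0: "leaves n \<tau>0 = L0"
    unfolding leaves_def \<tau>0_def L0_def using n1 by force
  have L0ne: "replicate N 0 \<in> L0" unfolding L0_def using n1 by (auto simp: words_def)
  have finL0: "finite L0" unfolding L0_def using finite_words_le[of n N] by (rule rev_finite_subset) auto
  have Aw: "A \<subseteq> words n" unfolding A_def L0_def using Gd_words[OF f] by auto
  have anti: "antichain A"
    unfolding antichain_def
  proof (intro ballI impI)
    fix a b assume a: "a \<in> A" and b: "b \<in> A" and p: "prefix a b"
    obtain w where w: "w \<in> L0" "a = f w" using a A_def by auto
    obtain w' where w': "w' \<in> L0" "b = f w'" using b A_def by auto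
    obtain d where d: "b = a @ d" using p by (auto simp: prefix_def)
    have dw: "d \<in> words n" using d b Aw by auto
    have "f (w @ d) = f w'" using ext[of w d] w w' d dw unfolding L0_def by auto
    then have "w @ d = w'" using inj by (simp add: inj_eq)
    then have "d = []" using w w' unfolding L0_def by auto
    then show "a = b" using d by simp
  qed
  have finA: "finite A" unfolding A_def using finL0 by simp
  have t1eq: "\<tau>1 = (\<Union>a\<in>A. set (prefixes a))" unfolding \<tau>1_def by auto
  have fint1: "finite \<tau>1" unfolding t1eq using finA by simp
  define S where "S = f ` {u \<in> words n. length u \<le> N}"
  have finS: "finite S" unfolding S_def using finite_words_le by simp
  have cover: "\<exists>a\<in>A. prefix a v" if v: "v \<in> words n" "v \<notin> S" for v
  proof -
    let ?u = "iv f v"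
    have fu: "f ?u = v" using B by (simp add: bij_is_surj surj_f_inv_f)
    have uw: "?u \<in> words n" using Gd_inv_words[OF f] v by simp
    have "\<not> length ?u \<le> N"
    proof
      assume "length ?u \<le> N"
      then have "f ?u \<in> S" unfolding S_def using uw by (intro imageI) simp
      then show False using v fu by simp
    qed
    then have lu: "N \<le> length ?u" by simp
    have "take N ?u \<in> L0" using uw lu unfolding L0_def by (auto simp: words_take)
    moreover have "f ?u = f (take N ?u) @ drop N ?u"
      using ext[of "take N ?u" "drop N ?u"] uw lu by (simp add: words_take words_drop)
    ultimately have "f (take N ?u) \<in> A" "prefix (f (take N ?u)) v"
      using fu unfolding A_def by (auto simp: prefix_def)
    then show ?thesis by blast
  qed
  obtain K where K: "\<forall>s\<in>S. length s < K"
    using finS by (metis finite_imageI finite_nat_set_iff_bounded imageI)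
  have child: "\<alpha> @ [j] \<in> \<tau>1" if i: "\<alpha> @ [i] \<in> \<tau>1" "i < n" and j: "j < n" for \<alpha> i j
  proof -
    obtain a where a: "a \<in> A" "prefix (\<alpha> @ [i]) a" using i unfolding \<tau>1_def by auto
    have aw: "\<alpha> \<in> words n" using a Aw by (meson subsetD words_append words_prefix)
    define v where "v = \<alpha> @ [j] @ replicate K 0"
    have vw: "v \<in> words n" unfolding v_def using aw j n1 by (auto simp: words_def)
    have "v \<notin> S" using K unfolding v_def by fastforce
    then obtain a' where a': "a' \<in> A" "prefix a' v" using cover vw by blast
    have "prefix a' (\<alpha> @ [j]) \<or> prefix (\<alpha> @ [j]) a'"
      using a'(2) unfolding v_def by (metis append_assoc prefix_same_cases prefixI)
    then show ?thesis
    proof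
      assume "prefix (\<alpha> @ [j]) a'" then show ?thesis using a' unfolding \<tau>1_def by auto
    next
      assume p: "prefix a' (\<alpha> @ [j])"
      show ?thesis
      proof (cases "a' = \<alpha> @ [j]")
        case True then show ?thesis using a' unfolding \<tau>1_def by auto
      next
        case False
        then have "prefix a' \<alpha>" using p by (simp add: prefix_snoc)
        then have "prefix a' a" using a(2) by (meson prefix_order.trans prefixI)
        then have "a' = a" using anti a a' unfolding antichain_def by blast
        then have "prefix (\<alpha> @ [i]) \<alpha>" using a \<open>prefix a' \<alpha>\<close> by (meson prefix_order.trans)
        then show ?thesis by (metis prefix_length_le length_append_singleton not_less_eq_eq order_refl)
      qed
    qed
  qed
  have t1: "is_tree n \<tau>1"
    unfolding is_tree_def
  proof (intro conjI allI impI)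
    show "finite \<tau>1" by (rule fint1)
    show "\<tau>1 \<subseteq> words n" unfolding \<tau>1_def using Aw words_prefix by blast
    show "[] \<in> \<tau>1" unfolding \<tau>1_def A_def using L0ne by auto
    fix \<alpha> \<beta> assume "\<alpha> @ \<beta> \<in> \<tau>1" then show "\<alpha> \<in> \<tau>1"
      unfolding \<tau>1_def using append_prefixD by blast
  next
    fix \<alpha> show "(\<forall>i<n. \<alpha> @ [i] \<in> \<tau>1) \<or> (\<forall>i<n. \<alpha> @ [i] \<notin> \<tau>1)"
      using child by blast
  qed
  have l1: "leaves n \<tau>1 = A"
  proof
    show "leaves n \<tau>1 \<subseteq> A"
    proof
      fix x assume x: "x \<in> leaves n \<tau>1"
      then obtain a where a: "a \<in> A" "prefix x a" unfolding leaves_def \<tau>1_def by auto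
      show "x \<in> A"
      proof (cases "x = a")
        case True then show ?thesis using a by simp
      next
        case False
        then obtain c r where cr: "a = x @ c # r" using a(2)
          by (metis append.right_neutral neq_Nil_conv prefix_def)
        have "c < n" using cr a Aw by auto
        moreover have "x @ [c] \<in> \<tau>1" unfolding \<tau>1_def using a cr by (auto intro!: bexI[of _ a])
        ultimately show ?thesis using x unfolding leaves_def by auto
      qed
    qed
    show "A \<subseteq> leaves n \<tau>1"
    proof
      fix a assume a: "a \<in> A"
      have "a @ [i] \<notin> \<tau>1" for i
      proof
        assume "a @ [i] \<in> \<tau>1"
        then obtain b where "b \<in> A" "prefix (a @ [i]) b" unfolding \<tau>1_def by auto
        then have "prefix a b" using append_prefixD by blast
        then have "a = b" using anti a \<open>b \<in> A\<close> unfolding antichain_def by blast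
        then show False using \<open>prefix (a @ [i]) b\<close> by (metis prefix_length_le length_append_singleton not_less_eq_eq order_refl)
      qed
      then show "a \<in> leaves n \<tau>1" using a unfolding leaves_def \<tau>1_def by auto
    qed
  qed
  have bb: "bij_betw f (leaves n \<tau>0) (leaves n \<tau>1)"
    unfolding l0 l1 A_def using inj_on_subset[OF inj, of L0] by (simp add: bij_betw_def)
  have v: "pmap n \<tau>0 f \<in> V_maps n" unfolding V_maps_def using t0 t1 bb by blast
  have "germ_eq n (pmap n \<tau>0 f) f"
    by (rule pmap_germ[OF t0]) (auto simp: l0 L0_def intro: ext)
  then show ?thesis using v germ_eq_sym by blast
qed




lemma tree_one:
  assumes t: "is_tree n \<tau>" and nl: "\<tau> \<subseteq> leaves n \<tau>"
  shows "\<tau> = {[]}"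
proof -
  have e: "[] \<in> \<tau>" using tree_Nil[OF t] .
  have "x = []" if x: "x \<in> \<tau>" for x
  proof (rule ccontr)
    assume "x \<noteq> []"
    then obtain c r where xr: "x = [c] @ r" by (metis append_Cons append_Nil neq_Nil_conv)
    then have c: "[c] \<in> \<tau>" using tree_pref[OF t] x by blast
    then have "c < n" using tree_words[OF t] by auto
    moreover have "[] \<in> leaves n \<tau>" using nl e by auto
    ultimately show False using c unfolding leaves_def by auto
  qed
  then show ?thesis using e by auto
qed

lemma leaves_one: "is_tree n \<tau> \<Longrightarrow> \<tau> \<subseteq> leaves n \<tau> \<Longrightarrow> leaves n \<tau> = {[]}"
  using tree_one leaves_sub by (metis subset_antisym)

lemma tree_two:
  assumes t: "is_tree n \<tau>" and a: "\<alpha> \<in> \<tau>" "\<alpha> \<notin> leaves n \<tau>" and n2: "2 \<le> n"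
  shows "2 \<le> card (leaves n \<tau>)"
proof -
  have c0: "\<alpha> @ [0] \<in> \<tau>" and c1: "\<alpha> @ [1] \<in> \<tau>" using nonleaf[OF a t] n2 by auto
  obtain l0 where l0: "l0 \<in> leaves n \<tau>" "prefix (\<alpha> @ [0]) l0" using tree_leaf_ext[OF t c0] by blast
  obtain l1 where l1: "l1 \<in> leaves n \<tau>" "prefix (\<alpha> @ [1]) l1" using tree_leaf_ext[OF t c1] by blast
  have "l0 \<noteq> l1"
  proof
    assume "l0 = l1"
    then have "prefix (\<alpha> @ [0]) (\<alpha> @ [1])"
      using l0 l1 prefix_length_prefix[of "\<alpha> @ [0]" l1 "\<alpha> @ [1]"] by simp
    then show False by simp
  qed
  moreover have "finite (leaves n \<tau>)" using tree_fin[OF t] leaves_sub finite_subset by blast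
  ultimately have "card {l0, l1} \<le> card (leaves n \<tau>)" using l0 l1 by (intro card_mono) auto
  then show ?thesis using \<open>l0 \<noteq> l1\<close> by simp
qed

lemma caret:
  assumes t: "is_tree n \<tau>" and ex: "\<exists>\<alpha>\<in>\<tau>. \<alpha> \<notin> leaves n \<tau>"
  shows "\<exists>\<alpha>\<in>\<tau>. \<alpha> \<notin> leaves n \<tau> \<and> (\<forall>i<n. \<alpha> @ [i] \<in> leaves n \<tau>)"
proof -
  let ?S = "\<tau> - leaves n \<tau>"
  have "finite ?S" using tree_fin[OF t] by simp
  moreover have "?S \<noteq> {}" using ex by auto
  ultimately obtain \<alpha> where a: "\<alpha> \<in> ?S" and mx: "\<forall>y\<in>?S. length y \<le> length \<alpha>"
    using max_len_elem by blast
  have "\<alpha> @ [i] \<in> leaves n \<tau>" if i: "i < n" for i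
  proof (rule ccontr)
    assume "\<alpha> @ [i] \<notin> leaves n \<tau>"
    moreover have "\<alpha> @ [i] \<in> \<tau>" using nonleaf[of \<alpha> \<tau> n i] a t i by auto
    ultimately have "\<alpha> @ [i] \<in> ?S" by auto
    then have "length (\<alpha> @ [i]) \<le> length \<alpha>" using mx by blast
    then show False by simp
  qed
  then show ?thesis using a by auto
qed

lemma tree_remove:
  assumes t: "is_tree n \<tau>" and a: "\<alpha> \<in> \<tau>" "\<alpha> \<notin> leaves n \<tau>"
    and ch: "\<forall>i<n. \<alpha> @ [i] \<in> leaves n \<tau>" and n1: "1 \<le> n"
    and C: "C = {\<alpha> @ [i] | i. i < n}"
  shows "is_tree n (\<tau> - C)" "leaves n (\<tau> - C) = (leaves n \<tau> - C) \<union> {\<alpha>}" "card (\<tau> - C) < card \<tau>"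
proof -
  have Ct: "C \<subseteq> \<tau>" using ch C leaves_sub by blast
  have inC: "x @ [i] \<in> C \<longleftrightarrow> x = \<alpha> \<and> i < n" for x i using C by auto
  have aC: "\<alpha> \<notin> C" using C by auto
  show "is_tree n (\<tau> - C)"
    unfolding is_tree_def
  proof (intro conjI allI impI)
    show "finite (\<tau> - C)" using tree_fin[OF t] by simp
    show "\<tau> - C \<subseteq> words n" using tree_words[OF t] by auto
    show "[] \<in> \<tau> - C" using tree_Nil[OF t] C by auto
    fix x y assume xy: "x @ y \<in> \<tau> - C"
    show "x \<in> \<tau> - C"
    proof
      show "x \<in> \<tau>" using xy tree_pref[OF t] by blast
      show "x \<notin> C"
      proof
        assume "x \<in> C"
        then obtain i where i: "x = \<alpha> @ [i]" "i < n" using C by auto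
        show False
        proof (cases y)
          case Nil then show False using xy \<open>x \<in> C\<close> by simp
        next
          case (Cons c r)
          then have "(x @ [c]) @ r \<in> \<tau>" using xy by simp
          then have xc: "x @ [c] \<in> \<tau>" using tree_pref[OF t] by blast
          then have "c < n" using tree_words[OF t] by auto
          moreover have "x \<in> leaves n \<tau>" using ch i by auto
          ultimately show False using xc unfolding leaves_def by auto
        qed
      qed
    qed
  next
    fix x
    show "(\<forall>i<n. x @ [i] \<in> \<tau> - C) \<or> (\<forall>i<n. x @ [i] \<notin> \<tau> - C)"
    proof (cases "x = \<alpha>")
      case True then show ?thesis using inC by auto
    next
      case False
      then have "x @ [i] \<in> \<tau> - C \<longleftrightarrow> x @ [i] \<in> \<tau>" for i using inC by auto
      moreover have "(\<forall>i<n. x @ [i] \<in> \<tau>) \<or> (\<forall>i<n. x @ [i] \<notin> \<tau>)" using t unfolding is_tree_def by blast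
      ultimately show ?thesis by simp
    qed
  qed
  show "leaves n (\<tau> - C) = (leaves n \<tau> - C) \<union> {\<alpha>}"
  proof
    show "leaves n (\<tau> - C) \<subseteq> (leaves n \<tau> - C) \<union> {\<alpha>}"
    proof
      fix x assume x: "x \<in> leaves n (\<tau> - C)"
      show "x \<in> (leaves n \<tau> - C) \<union> {\<alpha>}"
      proof (cases "x = \<alpha>")
        case True then show ?thesis by simp
      next
        case False
        then have "x @ [i] \<notin> \<tau>" if "i < n" for i using x that inC unfolding leaves_def by auto
        then show ?thesis using x unfolding leaves_def by auto
      qed
    qed
    show "(leaves n \<tau> - C) \<union> {\<alpha>} \<subseteq> leaves n (\<tau> - C)"
    proof
      fix x assume x: "x \<in> (leaves n \<tau> - C) \<union> {\<alpha>}"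
      show "x \<in> leaves n (\<tau> - C)"
      proof (cases "x = \<alpha>")
        case True then show ?thesis using a aC inC unfolding leaves_def by auto
      next
        case False then show ?thesis using x unfolding leaves_def by auto
      qed
    qed
  qed
  have "\<alpha> @ [0] \<in> C" using C n1 by auto
  then have "\<tau> - C \<subset> \<tau>" using Ct by auto
  then show "card (\<tau> - C) < card \<tau>" using tree_fin[OF t] psubset_card_mono by blast
qed

lemma ext_perm:
  assumes fin: "finite B" and X: "X \<subseteq> B" and inj: "inj_on f X" and fX: "f ` X \<subseteq> B"
  shows "\<exists>\<pi>. bij_betw \<pi> B B \<and> (\<forall>x\<in>X. \<pi> x = f x)"
proof -
  have fx: "finite X" using fin X finite_subset by blast
  have "card (B - X) = card (B - f ` X)"
    using card_Diff_subset[OF fx X] card_Diff_subset[OF finite_imageI[OF fx] fX] card_image[OF inj] by simp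
  then obtain g where g: "bij_betw g (B - X) (B - f ` X)"
    using finite_same_card_bij[of "B - X" "B - f ` X"] fin by auto
  define \<pi> where "\<pi> = (\<lambda>x. if x \<in> X then f x else g x)"
  have b1: "bij_betw \<pi> X (f ` X)" unfolding \<pi>_def using inj
    by (simp add: bij_betw_def inj_on_def)
  have b2: "bij_betw \<pi> (B - X) (B - f ` X)"
    using g bij_betw_cong[of "B - X" \<pi> g "B - f ` X"] unfolding \<pi>_def by auto
  have "bij_betw \<pi> (X \<union> (B - X)) (f ` X \<union> (B - f ` X))"
    by (rule bij_betw_combine[OF b1 b2]) auto
  moreover have "X \<union> (B - X) = B" "f ` X \<union> (B - f ` X) = B" using X fX by auto
  ultimately show ?thesis unfolding \<pi>_def by auto
qed

lemma realize:
  assumes n2: "2 \<le> n"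
    and Pid: "P id" and Pcomp: "\<And>f g. P f \<Longrightarrow> P g \<Longrightarrow> P (f \<circ> g)" and Pinv: "\<And>f. P f \<Longrightarrow> P (iv f)"
    and PGd: "\<And>f. P f \<Longrightarrow> Gd n f"
    and Pc: "\<And>A \<pi>. finite A \<Longrightarrow> A \<subseteq> words n \<Longrightarrow> antichain A \<Longrightarrow> bij_betw \<pi> A A \<Longrightarrow> P (cmap n A \<pi>)"
  shows "is_tree n \<tau> \<Longrightarrow> is_tree n \<tau>' \<Longrightarrow> bij_betw b (leaves n \<tau>) (leaves n \<tau>') \<Longrightarrow>
     \<exists>h. P h \<and> (\<forall>l\<in>leaves n \<tau>. \<forall>g\<in>words n. h (l @ g) = b l @ g)"
proof (induction "card \<tau>" arbitrary: \<tau> \<tau>' b rule: less_induct)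
  case less
  note t = less.prems(1) and t' = less.prems(2) and bb = less.prems(3)
  let ?L = "leaves n \<tau>" and ?B = "leaves n \<tau>'"
  have finL: "finite ?L" using tree_fin[OF t] leaves_sub finite_subset by blast
  have finB: "finite ?B" using tree_fin[OF t'] leaves_sub finite_subset by blast
  have cLB: "card ?L = card ?B" using bij_betw_same_card[OF bb] .
  show ?case
  proof (cases "\<exists>\<alpha>\<in>\<tau>. \<alpha> \<notin> leaves n \<tau>")
    case False
    then have L: "?L = {[]}" using leaves_one[OF t] by auto
    have "\<not> (\<exists>\<alpha>\<in>\<tau>'. \<alpha> \<notin> ?B)"
    proof
      assume "\<exists>\<alpha>\<in>\<tau>'. \<alpha> \<notin> ?B"
      then have "2 \<le> card ?B" using tree_two[OF t' _ _ n2] by blast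
      then show False using cLB L by simp
    qed
    then have L': "?B = {[]}" using leaves_one[OF t'] by auto
    have "b [] = []" using bb L L' bij_betwE by fastforce
    then have "P id \<and> (\<forall>l\<in>?L. \<forall>g\<in>words n. id (l @ g) = b l @ g)" using Pid L by simp
    then show ?thesis by blast
  next
    case True
    obtain \<alpha> where a: "\<alpha> \<in> \<tau>" "\<alpha> \<notin> ?L" "\<forall>i<n. \<alpha> @ [i] \<in> ?L"
      using caret[OF t True] by blast
    have "2 \<le> card ?L" using tree_two[OF t a(1,2) n2] .
    have True': "\<exists>\<alpha>\<in>\<tau>'. \<alpha> \<notin> ?B"
    proof (rule ccontr)
      assume "\<not> (\<exists>\<alpha>\<in>\<tau>'. \<alpha> \<notin> ?B)"
      then have "?B = {[]}" using leaves_one[OF t'] by auto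
      then show False using cLB \<open>2 \<le> card ?L\<close> by simp
    qed
    obtain \<alpha>' where a': "\<alpha>' \<in> \<tau>'" "\<alpha>' \<notin> ?B" "\<forall>i<n. \<alpha>' @ [i] \<in> ?B"
      using caret[OF t' True'] by blast
    define C where "C = {\<alpha> @ [i] | i. i < n}"
    define C' where "C' = {\<alpha>' @ [i] | i. i < n}"
    have n1: "1 \<le> n" using n2 by simp
    note r = tree_remove[OF t a n1 C_def]
    note r' = tree_remove[OF t' a' n1 C'_def]
    have CL: "C \<subseteq> ?L" using a C_def by auto
    have CB: "C' \<subseteq> ?B" using a' C'_def by auto
    have binj: "inj_on b ?L" using bb bij_betw_def by blast
    define f where "f = (\<lambda>x. \<alpha>' @ [last (inv_into ?L b x)])"
    have fb: "f (b (\<alpha> @ [i])) = \<alpha>' @ [i]" if "i < n" for i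
    proof -
      have "inv_into ?L b (b (\<alpha> @ [i])) = \<alpha> @ [i]" using binj a(3) that by (simp add: inv_into_f_f)
      then show ?thesis unfolding f_def by simp
    qed
    let ?X = "b ` C"
    have XB: "?X \<subseteq> ?B" using bb CL bij_betwE by blast
    have fX: "f ` ?X \<subseteq> ?B" using fb a' unfolding C_def by auto
    have injf: "inj_on f ?X"
    proof (rule inj_onI)
      fix x y assume x: "x \<in> ?X" and y: "y \<in> ?X" and e: "f x = f y"
      obtain i where i: "i < n" "x = b (\<alpha> @ [i])" using x C_def by auto
      obtain j where j: "j < n" "y = b (\<alpha> @ [j])" using y C_def by auto
      have "\<alpha>' @ [i] = \<alpha>' @ [j]" using e fb i j by metis
      then show "x = y" using i j by simp
    qed
    obtain \<pi> where pi: "bij_betw \<pi> ?B ?B" and pif: "\<forall>x\<in>?X. \<pi> x = f x"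
      using ext_perm[OF finB XB injf fX] by blast
    define b1 where "b1 = \<pi> \<circ> b"
    have bb1: "bij_betw b1 ?L ?B" unfolding b1_def using bb pi bij_betw_trans by blast
    have b1C: "b1 (\<alpha> @ [i]) = \<alpha>' @ [i]" if "i < n" for i
      using pif fb that unfolding b1_def C_def by auto
    have b1CC: "b1 ` C = C'"
    proof
      show "b1 ` C \<subseteq> C'" unfolding C_def C'_def using b1C by auto
      show "C' \<subseteq> b1 ` C"
      proof
        fix y assume "y \<in> C'"
        then obtain i where i: "i < n" "y = \<alpha>' @ [i]" unfolding C'_def by auto
        then have "y = b1 (\<alpha> @ [i])" "\<alpha> @ [i] \<in> C" using b1C unfolding C_def by auto
        then show "y \<in> b1 ` C" by blast
      qed
    qed
    have bCC: "bij_betw b1 C C'" using bij_betw_subset[OF bb1 CL b1CC] .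
    have bD: "bij_betw b1 (?L - C) (?B - C')" using bij_betw_DiffI[OF bb1 bCC CL CB] .
    define b' where "b' = (\<lambda>l. if l = \<alpha> then \<alpha>' else b1 l)"
    have "bij_betw b' (?L - C) (?B - C') = bij_betw b1 (?L - C) (?B - C')"
      by (rule bij_betw_cong) (use a(2) in \<open>auto simp: b'_def\<close>)
    then have bD': "bij_betw b' (?L - C) (?B - C')" using bD by simp
    have bS: "bij_betw b' {\<alpha>} {\<alpha>'}" unfolding b'_def by simp
    have "bij_betw b' ((?L - C) \<union> {\<alpha>}) ((?B - C') \<union> {\<alpha>'})"
      by (rule bij_betw_combine[OF bD' bS]) (use a'(2) in auto)
    then have bb': "bij_betw b' (leaves n (\<tau> - C)) (leaves n (\<tau>' - C'))"
      using r(2) r'(2) by simp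
    obtain h' where h': "P h'" "\<forall>l\<in>leaves n (\<tau> - C). \<forall>g\<in>words n. h' (l @ g) = b' l @ g"
      using less.hyps[OF r(3) r(1) r'(1) bb'] by blast
    define p where "p = cmap n ?B \<pi>"
    have Pp: "P p" unfolding p_def
      by (rule Pc[OF finB _ leaves_antichain[OF t'] pi]) (use tree_words[OF t'] leaves_sub in blast)
    have ip: "inj p" using Gd_bij[OF PGd[OF Pp]] bij_is_inj by blast
    define h where "h = iv p \<circ> h'"
    have Ph: "P h" unfolding h_def using Pcomp[OF Pinv[OF Pp] h'(1)] .
    have "h (l @ g) = b l @ g" if l: "l \<in> ?L" and g: "g \<in> words n" for l g
    proof -
      have key: "h' (l @ g) = b1 l @ g"
      proof (cases "l \<in> C")
        case True
        then obtain i where i: "i < n" "l = \<alpha> @ [i]" using C_def by auto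
        have "\<alpha> \<in> leaves n (\<tau> - C)" using r(2) by simp
        moreover have "[i] @ g \<in> words n" using i g by simp
        ultimately have "h' (\<alpha> @ ([i] @ g)) = b' \<alpha> @ [i] @ g" using h'(2) by blast
        then show ?thesis using i b1C unfolding b'_def by simp
      next
        case False
        then have "l \<in> leaves n (\<tau> - C)" "l \<noteq> \<alpha>" using r(2) l a(2) by auto
        then show ?thesis using h'(2) g unfolding b'_def by auto
      qed
      have blB: "b l \<in> ?B" using bb l bij_betwE by blast
      have "b l @ g \<in> words n" using blB g tree_words[OF t'] leaves_sub by auto
      then have "p (b l @ g) = \<pi> (b l) @ g"
        unfolding p_def using cmap_cone[OF leaves_antichain[OF t'] blB] by blast
      then have "p (b l @ g) = b1 l @ g" unfolding b1_def by simp
      then have "iv p (b1 l @ g) = b l @ g" using ip by (metis inv_f_f)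
      then show ?thesis unfolding h_def using key by simp
    qed
    then show ?thesis using Ph by blast
  qed
qed




lemma mem_germ: "g \<in> germ n f \<longleftrightarrow> germ_eq n f g" by (simp add: germ_def)

lemma germ_eq_iff: "germ n f = germ n g \<longleftrightarrow> germ_eq n f g"
proof
  assume "germ n f = germ n g"
  then have "g \<in> germ n f" using germ_eq_refl mem_germ by metis
  then show "germ_eq n f g" by (simp add: mem_germ)
next
  assume a: "germ_eq n f g"
  show "germ n f = germ n g"
    unfolding germ_def using a germ_eq_sym germ_eq_trans by blast
qed

lemma comp_germ:
  assumes f: "Gd n f" and g: "Gd n g" and ff: "germ_eq n f f'" and gg: "germ_eq n g g'"
  shows "germ_eq n (f \<circ> g) (f' \<circ> g')"
proof -
  let ?D = "{x \<in> words n. f x \<noteq> f' x}"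
  have "{w \<in> words n. (f \<circ> g) w \<noteq> (f' \<circ> g') w} \<subseteq> {w \<in> words n. g w \<noteq> g' w} \<union> {w \<in> words n. g w \<in> ?D}"
    using Gd_words[OF g] by auto
  moreover have "finite {w \<in> words n. g w \<in> ?D}"
  proof (rule finite_imageD)
    show "finite (g ` {w \<in> words n. g w \<in> ?D})"
      by (rule finite_subset[of _ ?D]) (use ff in \<open>auto simp: germ_eq_def\<close>)
    show "inj_on g {w \<in> words n. g w \<in> ?D}"
      using Gd_bij[OF g] by (meson bij_is_inj inj_on_subset subset_UNIV)
  qed
  moreover have "finite {w \<in> words n. g w \<noteq> g' w}" using gg by (simp add: germ_eq_def)
  ultimately show ?thesis unfolding germ_eq_def by (meson finite_UnI finite_subset)
qed

lemma realize_Gd: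
  assumes "2 \<le> n" "is_tree n \<tau>" "is_tree n \<tau>'" "bij_betw b (leaves n \<tau>) (leaves n \<tau>')"
  shows "\<exists>h. Gd n h \<and> (\<forall>l\<in>leaves n \<tau>. \<forall>g\<in>words n. h (l @ g) = b l @ g)"
  by (rule realize[of n "Gd n"]) (use assms in \<open>auto intro: Gd_comp Gd_inv Gd_cmap Gd_id\<close>)

lemma carrier_eq:
  assumes n2: "2 \<le> n"
  shows "carrier (Vgroup n) = germ n ` {f. Gd n f}"
proof
  show "carrier (Vgroup n) \<subseteq> germ n ` {f. Gd n f}"
  proof
    fix X assume "X \<in> carrier (Vgroup n)"
    then obtain v where v: "v \<in> V_maps n" "X = germ n v" by (auto simp: Vgroup_def)
    then obtain \<tau>0 \<tau>1 b where tb: "v = pmap n \<tau>0 b" "is_tree n \<tau>0" "is_tree n \<tau>1"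
      "bij_betw b (leaves n \<tau>0) (leaves n \<tau>1)" unfolding V_maps_def by blast
    obtain h where h: "Gd n h" "\<forall>l\<in>leaves n \<tau>0. \<forall>g\<in>words n. h (l @ g) = b l @ g"
      using realize_Gd[OF n2 tb(2,3,4)] by blast
    have "germ_eq n v h" unfolding tb(1) by (rule pmap_germ[OF tb(2)]) (use h in auto)
    then have "X = germ n h" using v germ_eq_iff by metis
    then show "X \<in> germ n ` {f. Gd n f}" using h by blast
  qed
  show "germ n ` {f. Gd n f} \<subseteq> carrier (Vgroup n)"
  proof
    fix X assume "X \<in> germ n ` {f. Gd n f}"
    then obtain f where f: "Gd n f" "X = germ n f" by auto
    obtain v where v: "v \<in> V_maps n" "germ_eq n f v" using Gd_Vmap[OF f(1)] n2 by auto
    then have "X = germ n v" using f germ_eq_iff by metis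
    then show "X \<in> carrier (Vgroup n)" using v by (auto simp: Vgroup_def)
  qed
qed

lemma mult_germ:
  assumes f: "Gd n f" and g: "Gd n g"
  shows "germ n f \<otimes>\<^bsub>Vgroup n\<^esub> germ n g = germ n (f \<circ> g)"
proof -
  have f1: "(SOME f'. f' \<in> germ n f) \<in> germ n f" using someI[of "\<lambda>f'. f' \<in> germ n f" f] germ_eq_refl mem_germ by metis
  have g1: "(SOME g'. g' \<in> germ n g) \<in> germ n g" using someI[of "\<lambda>g'. g' \<in> germ n g" g] germ_eq_refl mem_germ by metis
  have "germ_eq n (f \<circ> g) ((SOME f'. f' \<in> germ n f) \<circ> (SOME g'. g' \<in> germ n g))"
    using comp_germ[OF f g] f1 g1 mem_germ by metis
  then show ?thesis unfolding Vgroup_def using germ_eq_iff by (simp add: germ_eq_sym)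
qed

lemma one_V: "\<one>\<^bsub>Vgroup n\<^esub> = germ n id" by (simp add: Vgroup_def)

lemma group_V:
  assumes n2: "2 \<le> n"
  shows "group (Vgroup n)"
proof (rule groupI)
  note ce = carrier_eq[OF n2]
  fix x y assume x: "x \<in> carrier (Vgroup n)" and y: "y \<in> carrier (Vgroup n)"
  obtain f where f: "Gd n f" "x = germ n f" using x ce by auto
  obtain g where g: "Gd n g" "y = germ n g" using y ce by auto
  show "x \<otimes>\<^bsub>Vgroup n\<^esub> y \<in> carrier (Vgroup n)"
    using mult_germ[OF f(1) g(1)] Gd_comp[OF f(1) g(1)] f g ce by auto
next
  show "\<one>\<^bsub>Vgroup n\<^esub> \<in> carrier (Vgroup n)" using carrier_eq[OF n2] Gd_id one_V by auto
next
  note ce = carrier_eq[OF n2]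
  fix x y z assume x: "x \<in> carrier (Vgroup n)" and y: "y \<in> carrier (Vgroup n)" and z: "z \<in> carrier (Vgroup n)"
  obtain f where f: "Gd n f" "x = germ n f" using x ce by auto
  obtain g where g: "Gd n g" "y = germ n g" using y ce by auto
  obtain h where h: "Gd n h" "z = germ n h" using z ce by auto
  show "x \<otimes>\<^bsub>Vgroup n\<^esub> y \<otimes>\<^bsub>Vgroup n\<^esub> z = x \<otimes>\<^bsub>Vgroup n\<^esub> (y \<otimes>\<^bsub>Vgroup n\<^esub> z)"
    using f g h mult_germ Gd_comp by (simp add: comp_assoc)
next
  note ce = carrier_eq[OF n2]
  fix x assume x: "x \<in> carrier (Vgroup n)"
  obtain f where f: "Gd n f" "x = germ n f" using x ce by auto
  show "\<one>\<^bsub>Vgroup n\<^esub> \<otimes>\<^bsub>Vgroup n\<^esub> x = x" using mult_germ[OF Gd_id f(1)] f one_V by simp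
next
  note ce = carrier_eq[OF n2]
  fix x assume x: "x \<in> carrier (Vgroup n)"
  obtain f where f: "Gd n f" "x = germ n f" using x ce by auto
  have "iv f \<circ> f = id" using Gd_bij[OF f(1)] by (simp add: bij_is_inj inv_o_cancel)
  then have "germ n (iv f) \<otimes>\<^bsub>Vgroup n\<^esub> x = \<one>\<^bsub>Vgroup n\<^esub>"
    using mult_germ[OF Gd_inv[OF f(1)] f(1)] f one_V by simp
  moreover have "germ n (iv f) \<in> carrier (Vgroup n)" using ce Gd_inv[OF f(1)] by auto
  ultimately show "\<exists>y\<in>carrier (Vgroup n). y \<otimes>\<^bsub>Vgroup n\<^esub> x = \<one>\<^bsub>Vgroup n\<^esub>" by blast
qed

lemma germ_in: "2 \<le> n \<Longrightarrow> Gd n f \<Longrightarrow> germ n f \<in> carrier (Vgroup n)"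
  using carrier_eq by auto

lemma inv_germ:
  assumes n2: "2 \<le> n" and f: "Gd n f"
  shows "inv\<^bsub>Vgroup n\<^esub> (germ n f) = germ n (iv f)"
proof -
  interpret group "Vgroup n" by (rule group_V[OF n2])
  have "iv f \<circ> f = id" using Gd_bij[OF f] by (simp add: bij_is_inj inv_o_cancel)
  then have "germ n (iv f) \<otimes>\<^bsub>Vgroup n\<^esub> germ n f = \<one>\<^bsub>Vgroup n\<^esub>"
    using mult_germ[OF Gd_inv[OF f] f] one_V by simp
  then show ?thesis using inv_equality germ_in[OF n2 f] germ_in[OF n2 Gd_inv[OF f]] by blast
qed




definition par :: "nat list \<Rightarrow> nat list \<Rightarrow> bool" where
  "par u v \<longleftrightarrow> \<not> prefix u v \<and> \<not> prefix v u"

definition tr :: "nat list \<Rightarrow> nat list \<Rightarrow> nat list \<Rightarrow> nat list" where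
  "tr u v x = (if x = u then v else if x = v then u else x)"

definition swp :: "nat \<Rightarrow> nat list \<Rightarrow> nat list \<Rightarrow> nat list \<Rightarrow> nat list" where
  "swp n u v = cmap n {u, v} (tr u v)"

lemma par_sym: "par u v \<Longrightarrow> par v u" by (auto simp: par_def)

lemma par_anti: "par u v \<Longrightarrow> antichain {u, v}"
  by (auto simp: par_def antichain_def)

lemma tr_bij: "bij_betw (tr u v) {u, v} {u, v}"
  by (rule bij_betw_byWitness[where f'="tr u v"]) (auto simp: tr_def)

lemma Gd_swp: "par u v \<Longrightarrow> u \<in> words n \<Longrightarrow> v \<in> words n \<Longrightarrow> Gd n (swp n u v)"
  unfolding swp_def by (rule Gd_cmap) (auto simp: par_anti tr_bij)

lemma swp_u: "par u v \<Longrightarrow> u @ g \<in> words n \<Longrightarrow> swp n u v (u @ g) = v @ g"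
  unfolding swp_def using cmap_cone[OF par_anti, of u v u g n] by (simp add: tr_def)

lemma swp_v: "par u v \<Longrightarrow> v @ g \<in> words n \<Longrightarrow> swp n u v (v @ g) = u @ g"
  unfolding swp_def using cmap_cone[OF par_anti, of u v v g n] by (auto simp: tr_def par_def)

lemma swp_out: "\<not> prefix u w \<Longrightarrow> \<not> prefix v w \<Longrightarrow> swp n u v w = w"
  unfolding swp_def by (rule cmap_out) auto

lemma par_pref: "par z u \<Longrightarrow> \<not> prefix u (z @ g)"
  unfolding par_def by (metis prefix_same_cases prefixI)

lemma swp_par: "par z u \<Longrightarrow> par z v \<Longrightarrow> swp n u v (z @ g) = z @ g"
  by (rule swp_out) (auto simp: par_pref)

lemma swp_sym: "swp n u v = swp n v u"
proof -
  have "tr u v = tr v u" by (auto simp: tr_def fun_eq_iff)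
  moreover have "{u, v} = {v, u}" by auto
  ultimately show ?thesis unfolding swp_def by simp
qed

lemma swp_nw: "w \<notin> words n \<Longrightarrow> swp n u v w = w"
  unfolding swp_def by (rule cmap_nw)

lemma swp_invol: assumes "par u v" "u \<in> words n" "v \<in> words n" shows "swp n u v \<circ> swp n u v = id"
proof
  fix w show "(swp n u v \<circ> swp n u v) w = id w"
  proof (cases "w \<in> words n")
    case False then show ?thesis by (simp add: swp_nw)
  next
    case True
    show ?thesis
    proof (cases "prefix u w")
      case True
      then obtain g where "w = u @ g" by (auto simp: prefix_def)
      then show ?thesis using assms \<open>w \<in> words n\<close> by (simp add: swp_u swp_v)
    next
      case nu: False
      show ?thesis
      proof (cases "prefix v w")
        case True
        then obtain g where "w = v @ g" by (auto simp: prefix_def)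
        then show ?thesis using assms \<open>w \<in> words n\<close> by (simp add: swp_u swp_v)
      next
        case False
        then show ?thesis using nu by (simp add: swp_out)
      qed
    qed
  qed
qed

lemma finite_cone_short: "finite ((\<lambda>g. x @ g) ` {g \<in> words n. length g \<le> k})"
  using finite_words_le by blast

lemma conj_germ:
  assumes g: "Gd n g" and xy: "par x y" "x \<in> words n" "y \<in> words n"
    and xy': "par x' y'" "x' \<in> words n" "y' \<in> words n"
    and gx: "\<And>c. c \<in> words n \<Longrightarrow> k \<le> length c \<Longrightarrow> g (x @ c) = x' @ c"
    and gy: "\<And>c. c \<in> words n \<Longrightarrow> k \<le> length c \<Longrightarrow> g (y @ c) = y' @ c"
  shows "germ_eq n (g \<circ> swp n x y \<circ> iv g) (swp n x' y')"
proof -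
  let ?W = "{c \<in> words n. length c \<le> k}"
  let ?F = "(\<lambda>c. x' @ c) ` ?W \<union> (\<lambda>c. y' @ c) ` ?W \<union> g ` ((\<lambda>c. x @ c) ` ?W \<union> (\<lambda>c. y @ c) ` ?W)"
  have finF: "finite ?F" using finite_cone_short by blast
  have B: "bij g" using Gd_bij[OF g] .
  have ivg: "iv g (g z) = z" for z using B by (simp add: bij_is_inj)
  have giv: "g (iv g z) = z" for z using B by (simp add: bij_is_surj surj_f_inv_f)
  have "{w \<in> words n. (g \<circ> swp n x y \<circ> iv g) w \<noteq> swp n x' y' w} \<subseteq> ?F"
  proof
    fix w assume w: "w \<in> {w \<in> words n. (g \<circ> swp n x y \<circ> iv g) w \<noteq> swp n x' y' w}"
    then have ww: "w \<in> words n" and ne: "g (swp n x y (iv g w)) \<noteq> swp n x' y' w" by auto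
    show "w \<in> ?F"
    proof (rule ccontr)
      assume nF: "w \<notin> ?F"
      show False
      proof (cases "prefix x' w")
        case True
        then obtain c where c: "w = x' @ c" by (auto simp: prefix_def)
        have cw: "c \<in> words n" using c ww by simp
        have "\<not> length c \<le> k" using nF c cw by auto
        then have kc: "k \<le> length c" by simp
        have "iv g w = x @ c" using gx[OF cw kc] c ivg by metis
        then have "g (swp n x y (iv g w)) = y' @ c" using swp_u[OF xy(1)] xy cw gy[OF cw kc] by simp
        moreover have "swp n x' y' w = y' @ c" using swp_u[OF xy'(1)] c ww by simp
        ultimately show False using ne by simp
      next
        case nx: False
        show False
        proof (cases "prefix y' w")
          case True
          then obtain c where c: "w = y' @ c" by (auto simp: prefix_def)
          have cw: "c \<in> words n" using c ww by simp
          have "\<not> length c \<le> k" using nF c cw by auto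
          then have kc: "k \<le> length c" by simp
          have "iv g w = y @ c" using gy[OF cw kc] c ivg by metis
          then have "g (swp n x y (iv g w)) = x' @ c" using swp_v[OF xy(1)] xy cw gx[OF cw kc] by simp
          moreover have "swp n x' y' w = x' @ c" using swp_v[OF xy'(1)] c ww by simp
          ultimately show False using ne by simp
        next
          case ny: False
          let ?z = "iv g w"
          have zw: "?z \<in> words n" using Gd_inv_words[OF g] ww by simp
          have "\<not> prefix x ?z"
          proof
            assume "prefix x ?z"
            then obtain c where c: "?z = x @ c" by (auto simp: prefix_def)
            have cw: "c \<in> words n" using c zw by (metis words_append)
            show False
            proof (cases "length c \<le> k")
              case True
              then have "w \<in> g ` ((\<lambda>c. x @ c) ` ?W)" using c cw giv by (metis (mono_tags, lifting) image_eqI mem_Collect_eq)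
              then show False using nF by blast
            next
              case False
              then have "w = x' @ c" using gx[OF cw] c giv by (metis nle_le)
              then show False using nx by simp
            qed
          qed
          moreover have "\<not> prefix y ?z"
          proof
            assume "prefix y ?z"
            then obtain c where c: "?z = y @ c" by (auto simp: prefix_def)
            have cw: "c \<in> words n" using c zw by (metis words_append)
            show False
            proof (cases "length c \<le> k")
              case True
              then have "w \<in> g ` ((\<lambda>c. y @ c) ` ?W)" using c cw giv by (metis (mono_tags, lifting) image_eqI mem_Collect_eq)
              then show False using nF by blast
            next
              case False
              then have "w = y' @ c" using gy[OF cw] c giv by (metis nle_le)
              then show False using ny by simp
            qed
          qed
          ultimately have "g (swp n x y ?z) = w" using swp_out giv by metis
          moreover have "swp n x' y' w = w" using swp_out nx ny by metis
          ultimately show False using ne by simp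
        qed
      qed
    qed
  qed
  then show ?thesis unfolding germ_eq_def using finF finite_subset by blast
qed




lemma par_len: "length u = length v \<Longrightarrow> u \<noteq> v \<Longrightarrow> par u v"
  unfolding par_def prefix_def by auto

lemma anti_par: "antichain A \<Longrightarrow> a \<in> A \<Longrightarrow> b \<in> A \<Longrightarrow> a \<noteq> b \<Longrightarrow> par a b"
  unfolding antichain_def par_def by blast

lemma tr_invol: "tr a b (tr a b y) = y" by (auto simp: tr_def)

lemma tr_bij_A: "a \<in> A \<Longrightarrow> b \<in> A \<Longrightarrow> bij_betw (tr a b) A A"
  by (rule bij_betw_byWitness[where f'="tr a b"]) (auto simp: tr_def)

lemma swp_A:
  assumes ac: "antichain A" and a: "a \<in> A" and b: "b \<in> A" and ab: "a \<noteq> b" and z: "z \<in> A"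
    and w: "z @ g \<in> words n"
  shows "swp n a b (z @ g) = tr a b z @ g"
proof -
  have p: "par a b" using anti_par[OF ac a b ab] .
  show ?thesis
  proof (cases "z = a")
    case True then show ?thesis using swp_u[OF p] w by (simp add: tr_def)
  next
    case za: False
    show ?thesis
    proof (cases "z = b")
      case True then show ?thesis using swp_v[OF p] w ab by (simp add: tr_def)
    next
      case False
      then show ?thesis using swp_par anti_par[OF ac] za z a b by (simp add: tr_def)
    qed
  qed
qed

context
  fixes n :: nat and H
  assumes n2: "2 \<le> n" and sg: "subgroup H (Vgroup n)"
begin

lemma H_mult: "Gd n f \<Longrightarrow> Gd n g \<Longrightarrow> germ n f \<in> H \<Longrightarrow> germ n g \<in> H \<Longrightarrow> germ n (f \<circ> g) \<in> H"
proof -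
  assume a: "Gd n f" "Gd n g" "germ n f \<in> H" "germ n g \<in> H"
  have "germ n f \<otimes>\<^bsub>Vgroup n\<^esub> germ n g \<in> H" by (rule subgroup.m_closed[OF sg a(3,4)])
  then show ?thesis by (simp add: mult_germ[OF a(1,2)])
qed

lemma H_iv: "Gd n f \<Longrightarrow> germ n f \<in> H \<Longrightarrow> germ n (iv f) \<in> H"
proof -
  assume a: "Gd n f" "germ n f \<in> H"
  have "inv\<^bsub>Vgroup n\<^esub> germ n f \<in> H" by (rule subgroup.m_inv_closed[OF sg a(2)])
  then show ?thesis by (simp add: inv_germ[OF n2 a(1)])
qed

lemma H_eq: "germ_eq n f g \<Longrightarrow> germ n f \<in> H \<Longrightarrow> germ n g \<in> H"
  by (simp add: germ_eq_iff[symmetric])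

lemma H_id: "germ n id \<in> H"
  using subgroup.one_closed[OF sg] by (simp add: one_V)

lemma H_conj:
  assumes g: "Gd n g" "germ n g \<in> H" and xy: "par x y" "x \<in> words n" "y \<in> words n"
    and s: "germ n (swp n x y) \<in> H"
    and xy': "par x' y'" "x' \<in> words n" "y' \<in> words n"
    and gx: "\<And>c. c \<in> words n \<Longrightarrow> k \<le> length c \<Longrightarrow> g (x @ c) = x' @ c"
    and gy: "\<And>c. c \<in> words n \<Longrightarrow> k \<le> length c \<Longrightarrow> g (y @ c) = y' @ c"
  shows "germ n (swp n x' y') \<in> H"
proof -
  have G1: "Gd n (swp n x y)" using Gd_swp xy by blast
  have "germ n ((g \<circ> swp n x y) \<circ> iv g) \<in> H"
    by (rule H_mult[OF Gd_comp[OF g(1) G1] Gd_inv[OF g(1)] H_mult[OF g(1) G1 g(2) s] H_iv[OF g]])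
  moreover have "germ_eq n (g \<circ> swp n x y \<circ> iv g) (swp n x' y')"
    by (rule conj_germ[where k=k, OF g(1) xy xy']) (use gx gy in auto)
  ultimately show ?thesis using H_eq by blast
qed

lemma H_cmap:
  assumes fin: "finite A" and sub: "A \<subseteq> words n" and ac: "antichain A"
    and sw: "\<forall>a\<in>A. \<forall>b\<in>A. a \<noteq> b \<longrightarrow> germ n (swp n a b) \<in> H"
  shows "bij_betw \<pi> A A \<Longrightarrow> germ n (cmap n A \<pi>) \<in> H"
proof (induction "card {a \<in> A. \<pi> a \<noteq> a}" arbitrary: \<pi> rule: less_induct)
  case less
  note pb = less.prems
  show ?case
  proof (cases "{a \<in> A. \<pi> a \<noteq> a} = {}")
    case True
    then have "cmap n A \<pi> = cmap n A (\<lambda>x. x)" by (intro cmap_cong[OF ac]) auto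
    then show ?thesis using cmap_id[OF ac] H_id by simp
  next
    case False
    then obtain a where a: "a \<in> A" "\<pi> a \<noteq> a" by auto
    define b where "b = \<pi> a"
    have bA: "b \<in> A" using pb a unfolding b_def by (meson bij_betwE)
    define \<pi>' where "\<pi>' = tr a b \<circ> \<pi>"
    have pb': "bij_betw \<pi>' A A" unfolding \<pi>'_def using pb tr_bij_A[OF a(1) bA] bij_betw_trans by blast
    have inj: "inj_on \<pi> A" using pb bij_betw_def by blast
    have sub': "{x \<in> A. \<pi>' x \<noteq> x} \<subseteq> {x \<in> A. \<pi> x \<noteq> x} - {a}"
    proof
      fix x assume x: "x \<in> {x \<in> A. \<pi>' x \<noteq> x}"
      have "\<pi>' a = a" unfolding \<pi>'_def b_def tr_def by simp
      moreover have "\<pi> x \<noteq> x"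
      proof
        assume px: "\<pi> x = x"
        then have "x \<noteq> a" using a by auto
        moreover have "\<pi> x \<noteq> b" using px \<open>x \<noteq> a\<close> inj x a unfolding b_def inj_on_def by auto
        ultimately have "\<pi>' x = x" unfolding \<pi>'_def tr_def using px by auto
        then show False using x by simp
      qed
      ultimately show "x \<in> {x \<in> A. \<pi> x \<noteq> x} - {a}" using x by auto
    qed
    have "card {x \<in> A. \<pi>' x \<noteq> x} < card {x \<in> A. \<pi> x \<noteq> x}"
    proof (rule le_less_trans[OF card_mono[OF _ sub']])
      show "finite ({x \<in> A. \<pi> x \<noteq> x} - {a})" using fin by simp
      show "card ({x \<in> A. \<pi> x \<noteq> x} - {a}) < card {x \<in> A. \<pi> x \<noteq> x}"
        using a fin by (intro card_Diff1_less) auto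
    qed
    then have IH: "germ n (cmap n A \<pi>') \<in> H" using less.hyps pb' by blast
    have ab: "a \<noteq> b" using a b_def by simp
    have eq: "cmap n A \<pi> = swp n a b \<circ> cmap n A \<pi>'"
    proof
      fix w
      show "cmap n A \<pi> w = (swp n a b \<circ> cmap n A \<pi>') w"
        using ac
      proof (cases rule: cmap_cases[where w=w and n=n and \<pi>=\<pi>'])
        case out
        have l: "cmap n A \<pi> w = w" using out(2) cmap_nw[of w n A \<pi>] cmap_out[of A w n \<pi>] by blast
        have "swp n a b w = w"
        proof (cases "w \<in> words n")
          case False then show ?thesis by (rule swp_nw)
        next
          case True then have "\<not> prefix a w" "\<not> prefix b w" using out(2) a(1) bA by auto
          then show ?thesis by (rule swp_out)
        qed
        then show ?thesis using l out(1) by simp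
      next
        case (cone x g)
        have "\<pi>' x \<in> A" using pb' cone(1) bij_betwE by blast
        moreover have "\<pi>' x @ g \<in> words n" using calculation sub cone by auto
        ultimately have "swp n a b (\<pi>' x @ g) = tr a b (\<pi>' x) @ g"
          using swp_A[OF ac a(1) bA ab] by blast
        moreover have "tr a b (\<pi>' x) = \<pi> x" unfolding \<pi>'_def by (simp add: tr_invol)
        moreover have "cmap n A \<pi> w = \<pi> x @ g" using cone ac by (simp add: cmap_cone)
        ultimately show ?thesis using cone(5) by simp
      qed
    qed
    have Gs: "Gd n (swp n a b)" using Gd_swp anti_par[OF ac a(1) bA ab] sub a(1) bA by blast
    have Gc: "Gd n (cmap n A \<pi>')" using Gd_cmap[OF fin sub ac pb'] .
    show ?thesis unfolding eq by (rule H_mult[OF Gs Gc _ IH]) (use sw a(1) bA ab in blast)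
  qed
qed

end




definition W3 :: "nat \<Rightarrow> nat list set" where "W3 n = {w \<in> words n. length w = 3}"
definition enc :: "nat \<Rightarrow> nat list \<Rightarrow> nat" where "enc n w = w ! 0 * (n * n) + w ! 1 * n + w ! 2"
definition dec :: "nat \<Rightarrow> nat \<Rightarrow> nat list" where "dec n k = [k div (n * n), k div n mod n, k mod n]"

lemma W3_words: "W3 n \<subseteq> words n" by (auto simp: W3_def)
lemma W3_fin: "finite (W3 n)"
  using finite_words_le[of n 3] by (rule rev_finite_subset) (auto simp: W3_def)
lemma W3_anti: "antichain (W3 n)"
  unfolding antichain_def W3_def prefix_def by auto

lemma enc_dec: "enc n (dec n k) = k"
proof -
  have "k div (n * n) = k div n div n" by (simp add: div_mult2_eq)
  then have "k div (n * n) * (n * n) + k div n mod n * n = (k div n div n * n + k div n mod n) * n"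
    by (simp only: distrib_right mult.assoc)
  also have "\<dots> = k div n * n" by simp
  finally show ?thesis unfolding enc_def dec_def by simp
qed

lemma lt_sq: "(x::nat) < n \<Longrightarrow> y < n \<Longrightarrow> x * n + y < n * n"
proof -
  assume a: "x < n" "y < n"
  then have "x * n + y < (x + 1) * n" by simp
  also have "\<dots> \<le> n * n" using a by (intro mult_le_mono1) simp
  finally show ?thesis .
qed

lemma dec_W3: "k < n * n * n \<Longrightarrow> dec n k \<in> W3 n"
proof -
  assume k: "k < n * n * n"
  then have n0: "0 < n" by (cases n) auto
  have "k div (n * n) < n" using k n0 by (simp add: div_less_iff_less_mult mult.commute mult.left_commute)
  moreover have "k div n mod n < n" "k mod n < n" using n0 by auto
  ultimately show ?thesis unfolding dec_def W3_def by (auto simp: words_def)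
qed

lemma W3_form: assumes "w \<in> W3 n" shows "\<exists>a b c. w = [a, b, c] \<and> a < n \<and> b < n \<and> c < n"
proof -
  have l: "length w = 3" and s: "set w \<subseteq> {..<n}" using assms by (auto simp: W3_def words_def)
  obtain a b c where "w = [a, b, c]" using l by (auto simp: length_Suc_conv numeral_3_eq_3)
  then show ?thesis using s by auto
qed

lemma dec_enc: assumes w: "w \<in> W3 n" shows "dec n (enc n w) = w"
proof -
  obtain a b c where abc: "w = [a, b, c]" "a < n" "b < n" "c < n" using W3_form[OF w] by blast
  have e: "enc n w = (a * n + b) * n + c" unfolding enc_def abc by (simp add: algebra_simps)
  have d1: "enc n w div n = a * n + b" "enc n w mod n = c" unfolding e using abc by auto
  have d2: "(a * n + b) div n = a" "(a * n + b) mod n = b" using abc by auto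
  have "enc n w div (n * n) = a" using d1 d2 by (simp add: div_mult2_eq)
  then show ?thesis unfolding dec_def using d1 d2 abc by simp
qed

lemma enc_lt: assumes w: "w \<in> W3 n" shows "enc n w < n * n * n"
proof -
  obtain a b c where abc: "w = [a, b, c]" "a < n" "b < n" "c < n" using W3_form[OF w] by blast
  have e: "enc n w = (a * n + b) * n + c" unfolding enc_def abc by (simp add: algebra_simps)
  have "a * n + b < n * n" using lt_sq abc by simp
  have "(a * n + b) * n + c < (a * n + b + 1) * n" using abc by simp
  also have "\<dots> \<le> (n * n) * n" using \<open>a * n + b < n * n\<close> by (intro mult_le_mono1) simp
  finally show ?thesis unfolding e by simp
qed

lemma W3_pos: "w \<in> W3 n \<Longrightarrow> 0 < n"
proof -
  assume "w \<in> W3 n"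
  then have "enc n w < n * n * n" by (rule enc_lt)
  then show "0 < n" by (cases n) auto
qed

definition rho :: "nat \<Rightarrow> nat list \<Rightarrow> nat list" where
  "rho n w = dec n (n * n * n - 1 - enc n w)"
definition rho' :: "nat \<Rightarrow> nat list \<Rightarrow> nat list" where
  "rho' n w = (if enc n w \<le> n * n * n - 2 then dec n (n * n * n - 2 - enc n w) else w)"
definition R1 :: "nat \<Rightarrow> nat list \<Rightarrow> nat list" where "R1 n = cmap n (W3 n) (rho n)"
definition R2 :: "nat \<Rightarrow> nat list \<Rightarrow> nat list" where "R2 n = cmap n (W3 n) (rho' n)"

lemma rho_W3: "w \<in> W3 n \<Longrightarrow> rho n w \<in> W3 n"
  unfolding rho_def using enc_lt[of w n] by (intro dec_W3) simp

lemma rho_invol: "w \<in> W3 n \<Longrightarrow> rho n (rho n w) = w"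
  unfolding rho_def using enc_lt[of w n] by (simp add: enc_dec dec_enc)

lemma rho'_W3: "w \<in> W3 n \<Longrightarrow> rho' n w \<in> W3 n"
  unfolding rho'_def using enc_lt[of w n] by (auto intro: dec_W3)

lemma ar2: "(e::nat) < m \<Longrightarrow> e \<le> m - 2 \<Longrightarrow> m - Suc (Suc (m - Suc (Suc e))) = e" by arith

lemma rho'_invol: "w \<in> W3 n \<Longrightarrow> rho' n (rho' n w) = w"
  unfolding rho'_def using enc_lt[of w n] by (auto simp: enc_dec dec_enc ar2)

lemma rho_bij: "bij_betw (rho n) (W3 n) (W3 n)"
  by (rule bij_betw_byWitness[where f'="rho n"]) (auto simp: rho_W3 rho_invol)

lemma rho'_bij: "bij_betw (rho' n) (W3 n) (W3 n)"
  by (rule bij_betw_byWitness[where f'="rho' n"]) (auto simp: rho'_W3 rho'_invol)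

lemma Gd_R1: "Gd n (R1 n)" unfolding R1_def by (rule Gd_cmap[OF W3_fin W3_words W3_anti rho_bij])
lemma Gd_R2: "Gd n (R2 n)" unfolding R2_def by (rule Gd_cmap[OF W3_fin W3_words W3_anti rho'_bij])

lemma R1_invol: "R1 n \<circ> R1 n = id"
proof
  fix w
  have "R1 n (R1 n w) = cmap n (W3 n) (rho n \<circ> rho n) w"
    unfolding R1_def by (rule cmap_comp[OF W3_anti W3_words]) (use rho_W3 in blast)
  also have "cmap n (W3 n) (rho n \<circ> rho n) = cmap n (W3 n) (\<lambda>x. x)"
    by (rule cmap_cong[OF W3_anti]) (simp add: rho_invol)
  finally show "(R1 n \<circ> R1 n) w = id w" using cmap_id[OF W3_anti] by simp
qed

lemma R2_invol: "R2 n \<circ> R2 n = id"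
proof
  fix w
  have "R2 n (R2 n w) = cmap n (W3 n) (rho' n \<circ> rho' n) w"
    unfolding R2_def by (rule cmap_comp[OF W3_anti W3_words]) (use rho'_W3 in blast)
  also have "cmap n (W3 n) (rho' n \<circ> rho' n) = cmap n (W3 n) (\<lambda>x. x)"
    by (rule cmap_cong[OF W3_anti]) (simp add: rho'_invol)
  finally show "(R2 n \<circ> R2 n) w = id w" using cmap_id[OF W3_anti] by simp
qed

lemma shift: assumes "Suc j < n * n * n" shows "rho n (rho' n (dec n j)) = dec n (Suc j)"
proof -
  have j: "j \<le> n * n * n - 2" using assms by arith
  have a: "n * n * n - 1 - (n * n * n - 2 - j) = Suc j" using assms by arith
  have "rho' n (dec n j) = dec n (n * n * n - 2 - j)" using j unfolding rho'_def by (simp add: enc_dec)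
  then show ?thesis unfolding rho_def by (simp only: enc_dec a)
qed

lemma R12_cone: assumes x: "x \<in> W3 n" and g: "g \<in> words n"
  shows "(R1 n \<circ> R2 n) (x @ g) = rho n (rho' n x) @ g"
proof -
  have "R2 n (x @ g) = rho' n x @ g" unfolding R2_def using x g W3_words
    by (intro cmap_cone[OF W3_anti x]) auto
  moreover have "R1 n (rho' n x @ g) = rho n (rho' n x) @ g" unfolding R1_def using rho'_W3[OF x] g W3_words
    by (intro cmap_cone[OF W3_anti]) auto
  ultimately show ?thesis by simp
qed

lemma dec_inj: "dec n i = dec n j \<Longrightarrow> i = j"
  by (metis enc_dec)

lemma dec_par: "i < n * n * n \<Longrightarrow> j < n * n * n \<Longrightarrow> i \<noteq> j \<Longrightarrow> par (dec n i) (dec n j)"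
proof (rule par_len)
  show "length (dec n i) = length (dec n j)" by (simp add: dec_def)
  assume "i \<noteq> j" then show "dec n i \<noteq> dec n j" using dec_inj by blast
qed

lemma dec_words: "i < n * n * n \<Longrightarrow> dec n i \<in> words n"
  using dec_W3 W3_words by blast

context
  fixes n :: nat and H
  assumes n2: "2 \<le> n" and sg: "subgroup H (Vgroup n)"
    and hA: "germ n (R1 n) \<in> H" and hB: "germ n (R2 n) \<in> H"
    and hC: "germ n (swp n (dec n 0) (dec n 1)) \<in> H"
begin

lemma S1: "Suc k < n * n * n \<Longrightarrow> germ n (swp n (dec n k) (dec n (Suc k))) \<in> H"
proof (induction k)
  case 0 then show ?case using hC by simp
next
  case (Suc k)
  have gH: "germ n (R1 n \<circ> R2 n) \<in> H" by (rule H_mult[OF n2 sg Gd_R1 Gd_R2 hA hB])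
  have G: "Gd n (R1 n \<circ> R2 n)" using Gd_comp[OF Gd_R1 Gd_R2] .
  show ?case
  proof (rule H_conj[OF n2 sg G gH, where k=0])
    show "par (dec n k) (dec n (Suc k))" using Suc.prems by (intro dec_par) auto
    show "dec n k \<in> words n" "dec n (Suc k) \<in> words n" using Suc.prems by (auto intro: dec_words)
    show "germ n (swp n (dec n k) (dec n (Suc k))) \<in> H" using Suc by simp
    show "par (dec n (Suc k)) (dec n (Suc (Suc k)))" using Suc.prems by (intro dec_par) auto
    show "dec n (Suc k) \<in> words n" "dec n (Suc (Suc k)) \<in> words n" using Suc.prems by (auto intro: dec_words)
    fix c assume c: "c \<in> words n"
    show "(R1 n \<circ> R2 n) (dec n k @ c) = dec n (Suc k) @ c"
      using R12_cone[OF dec_W3 c, of k] shift[of k n] Suc.prems by simp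
    show "(R1 n \<circ> R2 n) (dec n (Suc k) @ c) = dec n (Suc (Suc k)) @ c"
      using R12_cone[OF dec_W3 c, of "Suc k"] shift[of "Suc k" n] Suc.prems by simp
  qed
qed

lemma S2: "i < j \<Longrightarrow> j < n * n * n \<Longrightarrow> germ n (swp n (dec n i) (dec n j)) \<in> H"
proof (induction j)
  case 0 then show ?case by simp
next
  case (Suc j)
  show ?case
  proof (cases "i = j")
    case True then show ?thesis using S1 Suc.prems by simp
  next
    case False
    then have ij: "i < j" using Suc.prems by simp
    have g: "Gd n (swp n (dec n j) (dec n (Suc j)))" using Suc.prems
      by (intro Gd_swp dec_par dec_words) auto
    have gH: "germ n (swp n (dec n j) (dec n (Suc j))) \<in> H" using S1 Suc.prems by simp
    show ?thesis
    proof (rule H_conj[OF n2 sg g gH, where k=0])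
      show "par (dec n i) (dec n j)" using ij Suc.prems by (intro dec_par) auto
      show "dec n i \<in> words n" "dec n j \<in> words n" using ij Suc.prems by (auto intro: dec_words)
      show "germ n (swp n (dec n i) (dec n j)) \<in> H" using Suc.IH ij Suc.prems by simp
      show "par (dec n i) (dec n (Suc j))" using ij Suc.prems by (intro dec_par) auto
      show "dec n (Suc j) \<in> words n" using Suc.prems by (auto intro: dec_words)
      show "dec n i \<in> words n" using ij Suc.prems by (auto intro: dec_words)
      fix c assume c: "c \<in> words n"
      show "swp n (dec n j) (dec n (Suc j)) (dec n i @ c) = dec n i @ c"
        using ij Suc.prems by (intro swp_par dec_par) auto
      show "swp n (dec n j) (dec n (Suc j)) (dec n j @ c) = dec n (Suc j) @ c"
        using Suc.prems c by (intro swp_u dec_par) (auto intro: dec_words)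
    qed
  qed
qed

lemma S3: assumes u: "u \<in> W3 n" and v: "v \<in> W3 n" and uv: "u \<noteq> v"
  shows "germ n (swp n u v) \<in> H"
proof -
  have e: "u = dec n (enc n u)" "v = dec n (enc n v)" using dec_enc u v by auto
  have ne: "enc n u \<noteq> enc n v" using e uv by metis
  have l: "enc n u < n * n * n" "enc n v < n * n * n" using enc_lt u v by auto
  show ?thesis
  proof (cases "enc n u < enc n v")
    case True then show ?thesis using S2[OF True l(2)] e by simp
  next
    case False
    then have "enc n v < enc n u" using ne by simp
    then show ?thesis using S2[OF _ l(1)] e swp_sym by metis
  qed
qed

lemma S4: "bij_betw \<pi> (W3 n) (W3 n) \<Longrightarrow> germ n (cmap n (W3 n) \<pi>) \<in> H"
  by (rule H_cmap[OF n2 sg W3_fin W3_words W3_anti]) (use S3 in blast)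

end




lemma par_app: "par u v \<Longrightarrow> par (u @ x) (v @ y)"
  unfolding par_def by (metis append_prefixD prefix_order.trans prefix_same_cases prefixI)

lemma par_not_eq: "par u v \<Longrightarrow> u \<noteq> v" by (auto simp: par_def)

context
  fixes n :: nat and H
  assumes n2: "2 \<le> n" and sg: "subgroup H (Vgroup n)"
    and hA: "germ n (R1 n) \<in> H" and hB: "germ n (R2 n) \<in> H"
    and hC: "germ n (swp n (dec n 0) (dec n 1)) \<in> H"
    and hD: "germ n (swp n [0, 0] [1, 0, 0]) \<in> H"
begin

lemma refine:
  assumes p: "par u v" and uw: "u \<in> words n" and vw: "v \<in> words n"
    and huu: "\<And>i j. i < n \<Longrightarrow> j < n \<Longrightarrow> i \<noteq> j \<Longrightarrow> germ n (swp n (u @ [i]) (u @ [j])) \<in> H"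
    and hvv: "\<And>i j. i < n \<Longrightarrow> j < n \<Longrightarrow> i \<noteq> j \<Longrightarrow> germ n (swp n (v @ [i]) (v @ [j])) \<in> H"
    and huv: "\<And>i j. i < n \<Longrightarrow> j < n \<Longrightarrow> germ n (swp n (u @ [i]) (v @ [j])) \<in> H"
  shows "germ n (swp n u v) \<in> H"
proof -
  define A where "A = {u @ [i] | i. i < n} \<union> {v @ [i] | i. i < n}"
  have A2: "A = (\<lambda>i. u @ [i]) ` {..<n} \<union> (\<lambda>i. v @ [i]) ` {..<n}" unfolding A_def by auto
  have fin: "finite A" unfolding A2 by simp
  have sub: "A \<subseteq> words n" unfolding A_def using uw vw by auto
  have uvpar: "par (u @ [i]) (v @ [j])" for i j using par_app[OF p] .
  have anti: "antichain A"
    unfolding antichain_def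
  proof (intro ballI impI)
    fix x y assume x: "x \<in> A" and y: "y \<in> A" and pxy: "prefix x y"
    show "x = y"
    proof -
      { fix i j assume "x = u @ [i]" "y = v @ [j]" then have False using uvpar[of i j] pxy by (simp add: par_def) }
      moreover
      { fix i j assume "x = v @ [i]" "y = u @ [j]" then have False using uvpar[of j i] pxy by (simp add: par_def) }
      moreover
      { fix i j assume "x = u @ [i]" "y = u @ [j]" then have "x = y" using pxy by (simp add: prefix_def) }
      moreover
      { fix i j assume "x = v @ [i]" "y = v @ [j]" then have "x = y" using pxy by (simp add: prefix_def) }
      ultimately show ?thesis using x y unfolding A_def by blast
    qed
  qed
  have sw: "\<forall>a\<in>A. \<forall>b\<in>A. a \<noteq> b \<longrightarrow> germ n (swp n a b) \<in> H"
  proof (intro ballI impI)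
    fix x y assume x: "x \<in> A" and y: "y \<in> A" and ne: "x \<noteq> y"
    { fix i j assume "i < n" "j < n" "x = u @ [i]" "y = v @ [j]" then have "germ n (swp n x y) \<in> H" using huv by simp }
    moreover
    { fix i j assume "i < n" "j < n" "x = v @ [i]" "y = u @ [j]" then have "germ n (swp n x y) \<in> H" using huv swp_sym by metis }
    moreover
    { fix i j assume "i < n" "j < n" "x = u @ [i]" "y = u @ [j]" then have "germ n (swp n x y) \<in> H" using huu ne by auto }
    moreover
    { fix i j assume "i < n" "j < n" "x = v @ [i]" "y = v @ [j]" then have "germ n (swp n x y) \<in> H" using hvv ne by auto }
    ultimately show "germ n (swp n x y) \<in> H" using x y unfolding A_def by blast
  qed
  have su: "swp n u v (u @ [i]) = v @ [i]" if "i < n" for i using swp_u[OF p] uw that by simp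
  have sv: "swp n u v (v @ [i]) = u @ [i]" if "i < n" for i using swp_v[OF p] vw that by simp
  have bij: "bij_betw (swp n u v) A A"
    by (rule bij_betw_byWitness[where f'="swp n u v"]) (auto simp: A_def su sv)
  have gc: "germ n (cmap n A (swp n u v)) \<in> H" by (rule H_cmap[OF n2 sg fin sub anti sw bij])
  have "{w \<in> words n. cmap n A (swp n u v) w \<noteq> swp n u v w} \<subseteq> {u, v}"
  proof
    fix w assume w: "w \<in> {w \<in> words n. cmap n A (swp n u v) w \<noteq> swp n u v w}"
    then have ww: "w \<in> words n" and ne: "cmap n A (swp n u v) w \<noteq> swp n u v w" by auto
    show "w \<in> {u, v}"
    proof (rule ccontr)
      assume nuv: "w \<notin> {u, v}"
      show False
      proof (cases "\<exists>x\<in>A. prefix x w")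
        case True
        then obtain x where x: "x \<in> A" "prefix x w" by auto
        then obtain g where g: "w = x @ g" by (auto simp: prefix_def)
        have cm: "cmap n A (swp n u v) w = swp n u v x @ g" using cmap_cone[OF anti x(1)] g ww by simp
        have "swp n u v w = swp n u v x @ g"
        proof -
          { fix i assume i: "i < n" "x = u @ [i]"
            then have "swp n u v w = v @ [i] @ g" using swp_u[OF p, of "[i] @ g"] g ww by simp
            then have ?thesis using su i by simp }
          moreover
          { fix i assume i: "i < n" "x = v @ [i]"
            then have "swp n u v w = u @ [i] @ g" using swp_v[OF p, of "[i] @ g"] g ww by simp
            then have ?thesis using sv i by simp }
          ultimately show ?thesis using x(1) unfolding A_def by blast
        qed
        then show False using cm ne by simp
      next
        case False
        have cm: "cmap n A (swp n u v) w = w" using False cmap_out by metis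
        have nu: "\<not> prefix u w"
        proof
          assume "prefix u w"
          then obtain c r where cr: "w = u @ c # r" using nuv by (metis append.right_neutral neq_Nil_conv prefix_def insertCI)
          then have "c < n" using ww by simp
          then have "u @ [c] \<in> A" unfolding A_def by auto
          moreover have "prefix (u @ [c]) w" using cr by simp
          ultimately show False using False by blast
        qed
        have nv: "\<not> prefix v w"
        proof
          assume "prefix v w"
          then obtain c r where cr: "w = v @ c # r" using nuv by (metis append.right_neutral neq_Nil_conv prefix_def insertCI)
          then have "c < n" using ww by simp
          then have "v @ [c] \<in> A" unfolding A_def by auto
          moreover have "prefix (v @ [c]) w" using cr by simp
          ultimately show False using False by blast
        qed
        have "swp n u v w = w" using swp_out[OF nu nv] .
        then show False using cm ne by simp
      qed
    qed
  qed
  then have "germ_eq n (cmap n A (swp n u v)) (swp n u v)"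
    unfolding germ_eq_def using finite_subset by blast
  then show ?thesis using H_eq[OF n2 sg] gc by blast
qed

lemma W3_mem: "length x = 3 \<Longrightarrow> x \<in> words n \<Longrightarrow> x \<in> W3 n" by (simp add: W3_def)

lemma T22: assumes p: "par u v" "u \<in> words n" "v \<in> words n" "length u = 2" "length v = 2"
  shows "germ n (swp n u v) \<in> H"
proof (rule refine[OF p(1-3)])
  fix i j assume "i < n" "j < n" "i \<noteq> j"
  then show "germ n (swp n (u @ [i]) (u @ [j])) \<in> H" using p by (intro S3[OF n2 sg hA hB hC] W3_mem) auto
next
  fix i j assume "i < n" "j < n" "i \<noteq> j"
  then show "germ n (swp n (v @ [i]) (v @ [j])) \<in> H" using p by (intro S3[OF n2 sg hA hB hC] W3_mem) auto
next
  fix i j assume "i < n" "j < n"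
  then show "germ n (swp n (u @ [i]) (v @ [j])) \<in> H" using p par_not_eq[OF par_app[OF p(1)]]
    by (intro S3[OF n2 sg hA hB hC] W3_mem) auto
qed

lemma T11: assumes p: "par u v" "u \<in> words n" "v \<in> words n" "length u = 1" "length v = 1"
  shows "germ n (swp n u v) \<in> H"
proof (rule refine[OF p(1-3)])
  fix i j assume "i < n" "j < n" "i \<noteq> j"
  then show "germ n (swp n (u @ [i]) (u @ [j])) \<in> H" using p by (intro T22 par_len) auto
next
  fix i j assume "i < n" "j < n" "i \<noteq> j"
  then show "germ n (swp n (v @ [i]) (v @ [j])) \<in> H" using p by (intro T22 par_len) auto
next
  fix i j assume "i < n" "j < n"
  then show "germ n (swp n (u @ [i]) (v @ [j])) \<in> H" using p by (intro T22 par_app) auto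
qed

lemma T23: assumes p: "par u v" "u \<in> words n" "v \<in> words n" "length u = 2" "length v = 3"
  shows "germ n (swp n u v) \<in> H"
proof -
  define X where "X = {[0, 0, i] | i. i < n} \<union> {[1, 0, 0]}"
  define f where "f = (\<lambda>x::nat list. if x = [1, 0, 0] then v else u @ [last x])"
  have XW: "X \<subseteq> W3 n" using n2 unfolding X_def W3_def by auto
  have uv: "u @ [j] \<noteq> v" for j using p(1) unfolding par_def by auto
  have injf: "inj_on f X"
  proof (rule inj_onI)
    fix x y assume x: "x \<in> X" and y: "y \<in> X" and e: "f x = f y"
    show "x = y"
    proof (cases "x = [1, 0, 0]"; cases "y = [1, 0, 0]")
      assume "x = [1, 0, 0]" "y = [1, 0, 0]" then show ?thesis by simp
    next
      assume a: "x = [1, 0, 0]" "y \<noteq> [1, 0, 0]"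
      then have "v = u @ [last y]" using e unfolding f_def by simp
      then show ?thesis using uv by metis
    next
      assume a: "x \<noteq> [1, 0, 0]" "y = [1, 0, 0]"
      then have "u @ [last x] = v" using e unfolding f_def by simp
      then show ?thesis using uv by metis
    next
      assume a: "x \<noteq> [1, 0, 0]" "y \<noteq> [1, 0, 0]"
      then obtain i j where "x = [0, 0, i]" "y = [0, 0, j]" using x y unfolding X_def by auto
      then show ?thesis using e a unfolding f_def by simp
    qed
  qed
  have fX: "f ` X \<subseteq> W3 n" using p unfolding X_def f_def W3_def by auto
  obtain \<pi> where pi: "bij_betw \<pi> (W3 n) (W3 n)" and pif: "\<forall>x\<in>X. \<pi> x = f x"
    using ext_perm[OF W3_fin XW injf fX] by blast
  define g where "g = cmap n (W3 n) \<pi>"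
  have G: "Gd n g" unfolding g_def by (rule Gd_cmap[OF W3_fin W3_words W3_anti pi])
  have gH: "germ n g \<in> H" unfolding g_def by (rule S4[OF n2 sg hA hB hC pi])
  have n1: "1 < n" using n2 by simp
  show ?thesis
  proof (rule H_conj[OF n2 sg G gH, where k=1 and x="[0, 0]" and y="[1, 0, 0]"])
    show "par [0, 0] [1, 0, 0]" by (simp add: par_def)
    show "[0, 0] \<in> words n" "[1, 0, 0] \<in> words n" using n1 by auto
    show "germ n (swp n [0, 0] [1, 0, 0]) \<in> H" by (rule hD)
    show "par u v" "u \<in> words n" "v \<in> words n" using p by auto
    fix c assume c: "c \<in> words n"
    show "g ([1, 0, 0] @ c) = v @ c"
    proof -
      have a1: "[1, 0, 0] \<in> W3 n" and a2: "[1, 0, 0] @ c \<in> words n" using n1 c by (auto simp: W3_def)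
      have "g ([1, 0, 0] @ c) = \<pi> [1, 0, 0] @ c" unfolding g_def by (rule cmap_cone[OF W3_anti a1 a2])
      then show ?thesis using pif unfolding X_def f_def by simp
    qed
    assume lc: "1 \<le> length c"
    then obtain i c' where ic: "c = i # c'" by (cases c) auto
    have i: "i < n" using c ic by simp
    have a1: "[0, 0, i] \<in> W3 n" and a2: "[0, 0, i] @ c' \<in> words n" using n1 i c ic by (auto simp: W3_def)
    have "g ([0, 0, i] @ c') = \<pi> [0, 0, i] @ c'" unfolding g_def by (rule cmap_cone[OF W3_anti a1 a2])
    moreover have "\<pi> [0, 0, i] = u @ [i]" using pif i unfolding X_def f_def by auto
    ultimately show "g ([0, 0] @ c) = u @ c" using ic by simp
  qed
qed

lemma T12: assumes p: "par u v" "u \<in> words n" "v \<in> words n" "length u = 1" "length v = 2"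
  shows "germ n (swp n u v) \<in> H"
proof (rule refine[OF p(1-3)])
  fix i j assume "i < n" "j < n" "i \<noteq> j"
  then show "germ n (swp n (u @ [i]) (u @ [j])) \<in> H" using p by (intro T22 par_len) auto
next
  fix i j assume "i < n" "j < n" "i \<noteq> j"
  then show "germ n (swp n (v @ [i]) (v @ [j])) \<in> H" using p by (intro S3[OF n2 sg hA hB hC] W3_mem) auto
next
  fix i j assume "i < n" "j < n"
  then show "germ n (swp n (u @ [i]) (v @ [j])) \<in> H" using p by (intro T23 par_app) auto
qed

lemma T13: assumes p: "par u v" "u \<in> words n" "v \<in> words n" "length u = 1" "length v = 3"
  shows "germ n (swp n u v) \<in> H"
proof -
  obtain a where a: "u = [a]" using p(4) by (auto simp: length_Suc_conv)
  obtain v0 v1 v2 where vv: "v = [v0, v1, v2]" using p(5) by (auto simp: length_Suc_conv numeral_3_eq_3)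
  have av: "a \<noteq> v0" using p(1) a vv by (auto simp: par_def)
  define c' where "c' = (if v1 = 0 then 1 else (0::nat))"
  define w where "w = [v0, c']"
  have c'n: "c' < n" using n2 unfolding c'_def by auto
  have ww: "w \<in> words n" unfolding w_def using c'n p(3) vv by auto
  have puw: "par u w" unfolding w_def a par_def using av by auto
  have pwv: "par w v" unfolding w_def vv par_def c'_def by auto
  have puv: "par u v" by (rule p(1))
  have s1: "germ n (swp n u w) \<in> H" by (rule T12[OF puw p(2) ww p(4)]) (simp add: w_def)
  have s2: "germ n (swp n w v) \<in> H" by (rule T23[OF pwv ww p(3) _ p(5)]) (simp add: w_def)
  have G: "Gd n (swp n w v)" by (rule Gd_swp[OF pwv ww p(3)])
  show ?thesis
  proof (rule H_conj[OF n2 sg G s2 puw p(2) ww s1 puv p(2) p(3), where k=0])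
    fix c assume c: "c \<in> words n"
    show "swp n w v (u @ c) = u @ c" by (rule swp_par[OF puw puv])
    show "swp n w v (w @ c) = v @ c" using swp_u[OF pwv] ww c by simp
  qed
qed

lemma par_Nil: "par u v \<Longrightarrow> u \<noteq> [] \<and> v \<noteq> []" by (auto simp: par_def)

lemma Tle: assumes p: "par u v" "u \<in> words n" "v \<in> words n" "length u \<le> length v" "length v \<le> 3"
  shows "germ n (swp n u v) \<in> H"
proof -
  have "length u \<noteq> 0" "length v \<noteq> 0" using par_Nil[OF p(1)] by auto
  then have "length u = 1 \<and> length v = 1 \<or> length u = 1 \<and> length v = 2 \<or> length u = 1 \<and> length v = 3
    \<or> length u = 2 \<and> length v = 2 \<or> length u = 2 \<and> length v = 3 \<or> length u = 3 \<and> length v = 3"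
    using p(4,5) by linarith
  then show ?thesis
  proof (elim disjE conjE)
    assume "length u = 1" "length v = 1" then show ?thesis using T11 p by blast
  next
    assume "length u = 1" "length v = 2" then show ?thesis using T12 p by blast
  next
    assume "length u = 1" "length v = 3" then show ?thesis using T13 p by blast
  next
    assume "length u = 2" "length v = 2" then show ?thesis using T22 p by blast
  next
    assume "length u = 2" "length v = 3" then show ?thesis using T23 p by blast
  next
    assume "length u = 3" "length v = 3"
    then show ?thesis using S3[OF n2 sg hA hB hC] p par_not_eq W3_mem by blast
  qed
qed

lemma Tshort: assumes p: "par u v" "u \<in> words n" "v \<in> words n" "length u \<le> 3" "length v \<le> 3"
  shows "germ n (swp n u v) \<in> H"
proof (cases "length u \<le> length v")
  case True then show ?thesis using Tle p by blast
next
  case False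
  then have "germ n (swp n v u) \<in> H" using Tle[OF par_sym[OF p(1)] p(3) p(2)] p by simp
  then show ?thesis using swp_sym by metis
qed

end




context
  fixes n :: nat and H
  assumes n2: "2 \<le> n" and sg: "subgroup H (Vgroup n)"
    and hA: "germ n (R1 n) \<in> H" and hB: "germ n (R2 n) \<in> H"
    and hC: "germ n (swp n (dec n 0) (dec n 1)) \<in> H"
    and hD: "germ n (swp n [0, 0] [1, 0, 0]) \<in> H"
begin

lemma red_step:
  assumes p: "par u v" and uw: "u \<in> words n" and vw: "v \<in> words n" and lu: "4 \<le> length u"
    and IH: "\<And>u' v'. length u' + length v' < length u + length v \<Longrightarrow> par u' v' \<Longrightarrow> u' \<in> words n \<Longrightarrow> v' \<in> words n \<Longrightarrow> germ n (swp n u' v') \<in> H"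
  shows "germ n (swp n u v) \<in> H"
proof -
  obtain a b c r where u: "u = [a, b, c] @ r"
    using lu by (auto simp: Suc_le_length_iff numeral_eq_Suc)
  have lr: "1 \<le> length r" using lu u by simp
  have abc: "a < n" "b < n" "c < n" "r \<in> words n" using uw u by auto
  define a' where "a' = (if a = 0 then 1 else (0::nat))"
  define b' where "b' = (if b = 0 then 1 else (0::nat))"
  have a'n: "a' < n" "a' \<noteq> a" using n2 unfolding a'_def by auto
  have b'n: "b' < n" "b' \<noteq> b" using n2 unfolding b'_def by auto
  define q where "q = (if v \<noteq> [] \<and> hd v = a then [a'] else [a, b'])"
  define P where "P = [a, b, c]"
  have qw: "q \<in> words n" unfolding q_def using a'n b'n abc by auto
  have Pw: "P \<in> words n" unfolding P_def using abc by auto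
  have lq: "length q \<le> 2" "1 \<le> length q" unfolding q_def by auto
  have pPq: "par P q" unfolding P_def q_def par_def using a'n b'n by auto
  have sPq: "germ n (swp n P q) \<in> H"
    by (rule Tshort[OF n2 sg hA hB hC hD pPq Pw qw]) (use lq in \<open>auto simp: P_def\<close>)
  have G: "Gd n (swp n P q)" by (rule Gd_swp[OF pPq Pw qw])
  define u' where "u' = q @ r"
  define v' where "v' = (if prefix P v then q @ drop 3 v else v)"
  have u'w: "u' \<in> words n" unfolding u'_def using qw abc by simp
  have v'w: "v' \<in> words n" unfolding v'_def using qw vw by (auto simp: words_drop)
  have gU: "swp n P q (u' @ g) = u @ g" if g: "g \<in> words n" for g
    using swp_v[OF pPq, of "r @ g" n] qw abc g unfolding u'_def u P_def by simp
  have vne: "v \<noteq> []" using p by (auto simp: par_def)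
  have gV: "swp n P q (v' @ g) = v @ g" if g: "g \<in> words n" for g
  proof (cases "prefix P v")
    case True
    then have vt: "v = P @ drop 3 v" unfolding P_def by (auto simp: prefix_def)
    have "swp n P q (q @ (drop 3 v @ g)) = P @ (drop 3 v @ g)"
      using swp_v[OF pPq] qw vw g by (simp add: words_drop)
    then show ?thesis unfolding v'_def using True vt by (metis append.assoc)
  next
    case False
    have pvP: "par v P"
    proof -
      have "\<not> prefix v P"
      proof
        assume "prefix v P"
        then have "prefix v u" unfolding u P_def by (metis prefix_append)
        then show False using p by (simp add: par_def)
      qed
      then show ?thesis using False by (simp add: par_def)
    qed
    have pvq: "par v q"
    proof (cases "hd v = a")
      case True
      then obtain vt where vt: "v = a # vt" using vne by (cases v) auto
      show ?thesis unfolding q_def using True vne vt a'n by (auto simp: par_def)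
    next
      case False
      then obtain h vt where vt: "v = h # vt" "h \<noteq> a" using vne by (cases v) auto
      show ?thesis unfolding q_def using vt by (auto simp: par_def)
    qed
    show ?thesis unfolding v'_def using False swp_par[OF pvP pvq] by simp
  qed
  have pu'v': "par u' v'"
  proof -
    have "\<not> prefix u' v'"
    proof
      assume "prefix u' v'"
      then obtain d where d: "v' = u' @ d" by (auto simp: prefix_def)
      have dw: "d \<in> words n" using d v'w by simp
      have "v = swp n P q (v' @ [])" using gV[of "[]"] by simp
      also have "\<dots> = swp n P q (u' @ d)" using d by simp
      also have "\<dots> = u @ d" using gU dw by simp
      finally show False using p by (simp add: par_def)
    qed
    moreover have "\<not> prefix v' u'"
    proof
      assume "prefix v' u'"
      then obtain d where d: "u' = v' @ d" by (auto simp: prefix_def)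
      have dw: "d \<in> words n" using d u'w by simp
      have "u = swp n P q (u' @ [])" using gU[of "[]"] by simp
      also have "\<dots> = swp n P q (v' @ d)" using d by simp
      also have "\<dots> = v @ d" using gV dw by simp
      finally show False using p by (simp add: par_def)
    qed
    ultimately show ?thesis by (simp add: par_def)
  qed
  have len: "length u' + length v' < length u + length v"
  proof -
    have "length u' < length u" unfolding u'_def u using lq by simp
    moreover have "length v' \<le> length v"
    proof (cases "prefix P v")
      case True
      then have "3 \<le> length v" unfolding P_def using prefix_length_le by fastforce
      then show ?thesis unfolding v'_def using True lq by simp
    next
      case False then show ?thesis unfolding v'_def by simp
    qed
    ultimately show ?thesis by simp
  qed
  have s': "germ n (swp n u' v') \<in> H" by (rule IH[OF len pu'v' u'w v'w])
  show ?thesis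
    by (rule H_conj[OF n2 sg G sPq pu'v' u'w v'w s' p uw vw, where k=0]) (use gU gV in auto)
qed

lemma all_swp: "par u v \<Longrightarrow> u \<in> words n \<Longrightarrow> v \<in> words n \<Longrightarrow> germ n (swp n u v) \<in> H"
proof (induction "length u + length v" arbitrary: u v rule: less_induct)
  case less
  show ?case
  proof (cases "length u \<le> 3 \<and> length v \<le> 3")
    case True
    then show ?thesis using Tshort[OF n2 sg hA hB hC hD less.prems] by blast
  next
    case False
    show ?thesis
    proof (cases "length v \<le> length u")
      case True
      then have "4 \<le> length u" using False by linarith
      then show ?thesis using red_step[OF less.prems] less.hyps by blast
    next
      case nle: False
      then have "4 \<le> length v" using False by linarith
      then have "germ n (swp n v u) \<in> H"
        using red_step[OF par_sym[OF less.prems(1)] less.prems(3) less.prems(2)] less.hyps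
        by (metis add.commute)
      then show ?thesis using swp_sym by metis
    qed
  qed
qed

lemma all_cmap: "finite A \<Longrightarrow> A \<subseteq> words n \<Longrightarrow> antichain A \<Longrightarrow> bij_betw \<pi> A A \<Longrightarrow> germ n (cmap n A \<pi>) \<in> H"
  by (rule H_cmap[OF n2 sg]) (auto intro!: all_swp anti_par)

lemma all_Gd: assumes f: "Gd n f" shows "germ n f \<in> H"
proof -
  obtain v where v: "v \<in> V_maps n" "germ_eq n f v" using Gd_Vmap[OF f] n2 by auto
  then obtain \<tau>0 \<tau>1 b where tb: "v = pmap n \<tau>0 b" "is_tree n \<tau>0" "is_tree n \<tau>1"
    "bij_betw b (leaves n \<tau>0) (leaves n \<tau>1)" unfolding V_maps_def by blast
  have "\<exists>h. (Gd n h \<and> germ n h \<in> H) \<and> (\<forall>l\<in>leaves n \<tau>0. \<forall>g\<in>words n. h (l @ g) = b l @ g)"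
  proof (rule realize[of n "\<lambda>h. Gd n h \<and> germ n h \<in> H", OF n2 _ _ _ _ _ tb(2,3,4)])
    show "Gd n id \<and> germ n id \<in> H" using Gd_id H_id[OF n2 sg] by simp
    show "\<And>f g. Gd n f \<and> germ n f \<in> H \<Longrightarrow> Gd n g \<and> germ n g \<in> H \<Longrightarrow> Gd n (f \<circ> g) \<and> germ n (f \<circ> g) \<in> H"
      using Gd_comp H_mult[OF n2 sg] by blast
    show "\<And>f. Gd n f \<and> germ n f \<in> H \<Longrightarrow> Gd n (iv f) \<and> germ n (iv f) \<in> H"
      using Gd_inv H_iv[OF n2 sg] by blast
    show "\<And>f. Gd n f \<and> germ n f \<in> H \<Longrightarrow> Gd n f" by blast
    show "\<And>A \<pi>. finite A \<Longrightarrow> A \<subseteq> words n \<Longrightarrow> antichain A \<Longrightarrow> bij_betw \<pi> A A \<Longrightarrow> Gd n (cmap n A \<pi>) \<and> germ n (cmap n A \<pi>) \<in> H"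
      using Gd_cmap all_cmap by blast
  qed
  then obtain h where h: "Gd n h" "germ n h \<in> H" "\<forall>l\<in>leaves n \<tau>0. \<forall>g\<in>words n. h (l @ g) = b l @ g" by blast
  have "germ_eq n v h" unfolding tb(1) by (rule pmap_germ[OF tb(2)]) (use h in auto)
  then have "germ_eq n h f" using v(2) germ_eq_sym germ_eq_trans by blast
  then show ?thesis using H_eq[OF n2 sg] h(2) by blast
qed

end




lemma cmap_nontriv:
  assumes n0: "0 < n" and ac: "antichain A" and sub: "A \<subseteq> words n" and a: "a \<in> A" and pa: "\<pi> a \<noteq> a"
  shows "germ n (cmap n A \<pi>) \<noteq> germ n id"
proof
  assume eq: "germ n (cmap n A \<pi>) = germ n id"
  have "germ_eq n (cmap n A \<pi>) id" using eq by (simp only: germ_eq_iff)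
  then have fin: "finite {w \<in> words n. cmap n A \<pi> w \<noteq> id w}" by (simp only: germ_eq_def)
  let ?f = "\<lambda>k. a @ replicate k (0::nat)"
  have aw: "a \<in> words n" using a sub by auto
  have sub2: "range ?f \<subseteq> {w \<in> words n. cmap n A \<pi> w \<noteq> id w}"
  proof
    fix w assume "w \<in> range ?f"
    then obtain k where k: "w = a @ replicate k 0" by auto
    have rw: "replicate k 0 \<in> words n" using n0 by (auto simp: words_def)
    have ww: "w \<in> words n" using aw rw k by simp
    have "cmap n A \<pi> w = \<pi> a @ replicate k 0" unfolding k by (rule cmap_cone[OF ac a]) (use ww k in simp)
    then have "cmap n A \<pi> w \<noteq> w" using pa k by simp
    then show "w \<in> {w \<in> words n. cmap n A \<pi> w \<noteq> id w}" using ww by simp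
  qed
  have inj: "inj ?f" by (rule injI) simp
  have "finite (range ?f)" by (rule finite_subset[OF sub2 fin])
  then have "finite (UNIV :: nat set)" using finite_imageD inj by blast
  then show False by simp
qed

theorem theorem4p1:
  fixes n :: nat
  assumes "n \<ge> 2"
  shows "group (Vgroup n) \<and>
    (\<exists>a b c d. {a, b, c, d} \<subseteq> carrier (Vgroup n)
       \<and> (\<forall>x\<in>{a, b, c, d}. x \<noteq> \<one>\<^bsub>Vgroup n\<^esub> \<and> x \<otimes>\<^bsub>Vgroup n\<^esub> x = \<one>\<^bsub>Vgroup n\<^esub>)
       \<and> generate (Vgroup n) {a, b, c, d} = carrier (Vgroup n))"
proof -
  have n2: "2 \<le> n" using assms .
  have n0: "0 < n" using n2 by simp
  have G: "group (Vgroup n)" by (rule group_V[OF n2])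
  interpret G: group "Vgroup n" by (rule G)
  have m8: "8 \<le> n * n * n"
  proof -
    have "2 * 2 \<le> n * n" using n2 by (intro mult_le_mono) auto
    then have "2 * 2 * 2 \<le> n * n * n" using n2 by (intro mult_le_mono) auto
    then show ?thesis by simp
  qed
  define fA where "fA = R1 n"
  define fB where "fB = R2 n"
  define fC where "fC = swp n (dec n 0) (dec n 1)"
  define fD where "fD = swp n [0, 0] [1, 0, 0]"
  have m1: "0 < n * n * n" "1 < n * n * n" using m8 by linarith+
  have p01: "par (dec n 0) (dec n 1)" by (rule dec_par[OF m1]) simp
  have w0: "dec n 0 \<in> words n" "dec n 1 \<in> words n" using dec_words m1 by auto
  have pD: "par [0, 0] [1, 0, 0]" by (simp add: par_def)
  have wD: "[0, 0] \<in> words n" "[1, 0, 0] \<in> words n" using n2 by auto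
  have GA: "Gd n fA" unfolding fA_def by (rule Gd_R1)
  have GB: "Gd n fB" unfolding fB_def by (rule Gd_R2)
  have GC: "Gd n fC" unfolding fC_def by (rule Gd_swp[OF p01 w0])
  have GD: "Gd n fD" unfolding fD_def by (rule Gd_swp[OF pD wD])
  have IA: "fA \<circ> fA = id" unfolding fA_def by (rule R1_invol)
  have IB: "fB \<circ> fB = id" unfolding fB_def by (rule R2_invol)
  have IC: "fC \<circ> fC = id" unfolding fC_def by (rule swp_invol[OF p01 w0])
  have ID: "fD \<circ> fD = id" unfolding fD_def by (rule swp_invol[OF pD wD])
  have d0: "dec n 0 \<in> W3 n" using m1 by (intro dec_W3) auto
  have NA: "germ n fA \<noteq> germ n id" unfolding fA_def R1_def
  proof (rule cmap_nontriv[OF n0 W3_anti W3_words d0])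
    have "rho n (dec n 0) = dec n (n * n * n - 1)" unfolding rho_def by (simp add: enc_dec)
    moreover have "n * n * n - 1 \<noteq> 0" using m8 by simp
    ultimately show "rho n (dec n 0) \<noteq> dec n 0" using dec_inj by metis
  qed
  have NB: "germ n fB \<noteq> germ n id" unfolding fB_def R2_def
  proof (rule cmap_nontriv[OF n0 W3_anti W3_words d0])
    have "rho' n (dec n 0) = dec n (n * n * n - 2)" unfolding rho'_def by (simp add: enc_dec)
    moreover have "n * n * n - 2 \<noteq> 0" using m8 by simp
    ultimately show "rho' n (dec n 0) \<noteq> dec n 0" using dec_inj by metis
  qed
  have NC: "germ n fC \<noteq> germ n id" unfolding fC_def swp_def
    by (rule cmap_nontriv[OF n0 par_anti[OF p01]]) (use w0 par_not_eq[OF p01] in \<open>auto simp: tr_def\<close>)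
  have ND: "germ n fD \<noteq> germ n id" unfolding fD_def swp_def
    by (rule cmap_nontriv[OF n0 par_anti[OF pD]]) (use wD in \<open>auto simp: tr_def\<close>)
  define S where "S = {germ n fA, germ n fB, germ n fC, germ n fD}"
  have Sc: "S \<subseteq> carrier (Vgroup n)" unfolding S_def using germ_in[OF n2] GA GB GC GD by auto
  have e: "germ n f \<noteq> \<one>\<^bsub>Vgroup n\<^esub> \<and> germ n f \<otimes>\<^bsub>Vgroup n\<^esub> germ n f = \<one>\<^bsub>Vgroup n\<^esub>"
    if "Gd n f" "f \<circ> f = id" "germ n f \<noteq> germ n id" for f
  proof
    show "germ n f \<noteq> \<one>\<^bsub>Vgroup n\<^esub>" unfolding one_V by (rule that(3))
    have "germ n f \<otimes>\<^bsub>Vgroup n\<^esub> germ n f = germ n (f \<circ> f)" by (rule mult_germ[OF that(1) that(1)])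
    also have "\<dots> = germ n id" by (simp only: that(2))
    finally show "germ n f \<otimes>\<^bsub>Vgroup n\<^esub> germ n f = \<one>\<^bsub>Vgroup n\<^esub>" by (simp only: one_V)
  qed
  have inv: "\<forall>x\<in>S. x \<noteq> \<one>\<^bsub>Vgroup n\<^esub> \<and> x \<otimes>\<^bsub>Vgroup n\<^esub> x = \<one>\<^bsub>Vgroup n\<^esub>"
  proof (unfold S_def, intro ballI)
    fix x assume "x \<in> {germ n fA, germ n fB, germ n fC, germ n fD}"
    then consider "x = germ n fA" | "x = germ n fB" | "x = germ n fC" | "x = germ n fD" by blast
    then show "x \<noteq> \<one>\<^bsub>Vgroup n\<^esub> \<and> x \<otimes>\<^bsub>Vgroup n\<^esub> x = \<one>\<^bsub>Vgroup n\<^esub>"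
    proof cases
      case 1 then show ?thesis using e[OF GA IA NA] by simp
    next
      case 2 then show ?thesis using e[OF GB IB NB] by simp
    next
      case 3 then show ?thesis using e[OF GC IC NC] by simp
    next
      case 4 then show ?thesis using e[OF GD ID ND] by simp
    qed
  qed
  have sgS: "subgroup (generate (Vgroup n) S) (Vgroup n)" by (rule G.generate_is_subgroup[OF Sc])
  have gen: "generate (Vgroup n) S = carrier (Vgroup n)"
  proof
    show "generate (Vgroup n) S \<subseteq> carrier (Vgroup n)" using subgroup.subset[OF sgS] .
    show "carrier (Vgroup n) \<subseteq> generate (Vgroup n) S"
    proof
      fix X assume "X \<in> carrier (Vgroup n)"
      then obtain f where f: "Gd n f" "X = germ n f" using carrier_eq[OF n2] by auto
      have inc: "x \<in> S \<Longrightarrow> x \<in> generate (Vgroup n) S" for x by (rule generate.incl)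
      have "germ n f \<in> generate (Vgroup n) S"
        by (rule all_Gd[OF n2 sgS _ _ _ _ f(1)]) (use inc in \<open>auto simp: S_def fA_def fB_def fC_def fD_def\<close>)
      then show "X \<in> generate (Vgroup n) S" using f by simp
    qed
  qed
  show ?thesis
    apply (rule conjI[OF G])
    apply (rule exI[of _ "germ n fA"], rule exI[of _ "germ n fB"], rule exI[of _ "germ n fC"], rule exI[of _ "germ n fD"])
    using Sc inv gen unfolding S_def by (intro conjI) assumption+
qed



end
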